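(* Let $(\mathcal{M},g)$ be a pseudo-Riemannian manifold of dimension $D\ge3$ whose Weyl endomorphism is not invertible. Suppose there is a smooth function $\Omega>0$ such that $\tilde g_{ab}=\Omega^{-2}g_{ab}$ is an Einstein metric. Then $$C_{be}{}^{qp}(W^+)_{qp}{}^{rs}\,\nabla_{[r}L_{s]a}=\nabla_{[b}L_{e]a}.$$
   Context: Conventions. - Abstract index notation is used, with indices raised and lowered by $g$. - $\nabla$ is the Levi-Civita connection of $g$. - Curvature: $\nabla_a\nabla_b\omega_c-\nabla_b\nabla_a\omega_c=R_{abc}{}^d\omega_d$, $R_{ac}=R_{abc}{}^b$, $R=g^{ab}R_{ab}$. - Schouten tensor: $L_{ab}=\frac{R_{ab}}{D-2}-\frac{g_{ab}R}{2(D-1)(D-2)}$. - Weyl tensor: $C_{abc}{}^d=R_{abc}{}^d-2L_{[b}{}^dg_{a]c}-2\delta_{[b}{}^dL_{a]c}$. Weyl endomorphism and pseudo-inverse. - The Weyl endomorphism is $C^{ac}{}_{be}$, regarded as the linear map $\psi^{be}\mapsto C^{ac}{}_{be}\psi^{be}$ on bivectors. - The Moore–Penrose pseudo-inverse of a real matrix $A$ is the unique $A^+$ with $AA^+A=A$, $A^+AA^+=A^+$, $(AA^+)^T=AA^+$ and $(A^+A)^T=A^+A$. - $(W^+)_{ab}{}^{cd}$ denotes the tensor, antisymmetric in each index pair, representing the Moore–Penrose pseudo-inverse of the Weyl endomorphism. Other index positions are obtained with $g$. *)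

theory Defs
  imports "HOL-Analysis.Analysis"
begin

text \<open>A pseudo-Riemannian metric on an open set U of
  real^'n (coordinates indexed by the finite type 'n, so D = CARD('n)) is a smooth
  field of symmetric invertible matrices. All tensors are given by their components
  in the coordinate basis; abstract indices become explicit sums over UNIV.\<close>

definition pd :: "'n::finite \<Rightarrow> (real^'n \<Rightarrow> 'a::real_normed_vector) \<Rightarrow> real^'n \<Rightarrow> 'a" where
  "pd i f x = vector_derivative (\<lambda>t. f (x + t *\<^sub>R axis i 1)) (at 0)"

fun iter_pd :: "'n::finite list \<Rightarrow> (real^'n \<Rightarrow> 'a::real_normed_vector) \<Rightarrow> real^'n \<Rightarrow> 'a" where
  "iter_pd [] f = f"
| "iter_pd (i # is) f = pd i (iter_pd is f)"

definition smooth_on :: "(real^'n::finite) set \<Rightarrow> (real^'n \<Rightarrow> 'a::real_normed_vector) \<Rightarrow> bool" where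
  "smooth_on U f \<longleftrightarrow> (\<forall>is. \<forall>x\<in>U. iter_pd is f differentiable (at x))"

definition metric_on :: "(real^'n::finite) set \<Rightarrow> (real^'n \<Rightarrow> real^'n^'n) \<Rightarrow> bool" where
  "metric_on U g \<longleftrightarrow> open U \<and> smooth_on U g \<and>
     (\<forall>x\<in>U. transpose (g x) = g x \<and> det (g x) \<noteq> 0)"

definition ginv :: "(real^'n::finite \<Rightarrow> real^'n^'n) \<Rightarrow> real^'n \<Rightarrow> real^'n^'n" where
  "ginv G x = matrix_inv (G x)"

definition christoffel :: "(real^'n::finite \<Rightarrow> real^'n^'n) \<Rightarrow> real^'n \<Rightarrow> 'n \<Rightarrow> 'n \<Rightarrow> 'n \<Rightarrow> real" where
  "christoffel G x c a b = (1/2) * (\<Sum>d\<in>UNIV. ginv G x $ c $ d *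
      (pd a (\<lambda>y. G y $ d $ b) x + pd b (\<lambda>y. G y $ d $ a) x - pd d (\<lambda>y. G y $ a $ b) x))"

text \<open>R_{abc}^d with the convention nabla_a nabla_b w_c - nabla_b nabla_a w_c = R_{abc}^d w_d.\<close>
definition riem :: "(real^'n::finite \<Rightarrow> real^'n^'n) \<Rightarrow> real^'n \<Rightarrow> 'n \<Rightarrow> 'n \<Rightarrow> 'n \<Rightarrow> 'n \<Rightarrow> real" where
  "riem G x a b c d =
     pd b (\<lambda>y. christoffel G y d a c) x - pd a (\<lambda>y. christoffel G y d b c) x
     + (\<Sum>e\<in>UNIV. christoffel G x d b e * christoffel G x e a c
                 - christoffel G x d a e * christoffel G x e b c)"

definition ricci :: "(real^'n::finite \<Rightarrow> real^'n^'n) \<Rightarrow> real^'n \<Rightarrow> 'n \<Rightarrow> 'n \<Rightarrow> real" where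
  "ricci G x a c = (\<Sum>b\<in>UNIV. riem G x a b c b)"

definition scal :: "(real^'n::finite \<Rightarrow> real^'n^'n) \<Rightarrow> real^'n \<Rightarrow> real" where
  "scal G x = (\<Sum>a\<in>UNIV. \<Sum>c\<in>UNIV. ginv G x $ a $ c * ricci G x a c)"

definition schouten :: "(real^'n::finite \<Rightarrow> real^'n^'n) \<Rightarrow> real^'n \<Rightarrow> 'n \<Rightarrow> 'n \<Rightarrow> real" where
  "schouten G x a b = ricci G x a b / (real CARD('n) - 2)
     - G x $ a $ b * scal G x / (2 * (real CARD('n) - 1) * (real CARD('n) - 2))"

definition schouten_mixed :: "(real^'n::finite \<Rightarrow> real^'n^'n) \<Rightarrow> real^'n \<Rightarrow> 'n \<Rightarrow> 'n \<Rightarrow> real" where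
  "schouten_mixed G x b d = (\<Sum>e\<in>UNIV. schouten G x b e * ginv G x $ e $ d)"

definition weyl :: "(real^'n::finite \<Rightarrow> real^'n^'n) \<Rightarrow> real^'n \<Rightarrow> 'n \<Rightarrow> 'n \<Rightarrow> 'n \<Rightarrow> 'n \<Rightarrow> real" where
  "weyl G x a b c d = riem G x a b c d
     - (schouten_mixed G x b d * G x $ a $ c - schouten_mixed G x a d * G x $ b $ c)
     - ((if b = d then 1 else 0) * schouten G x a c - (if a = d then 1 else 0) * schouten G x b c)"

definition weyl_uudd :: "(real^'n::finite \<Rightarrow> real^'n^'n) \<Rightarrow> real^'n \<Rightarrow> 'n \<Rightarrow> 'n \<Rightarrow> 'n \<Rightarrow> 'n \<Rightarrow> real" where
  "weyl_uudd G x a c b e = (\<Sum>p\<in>UNIV. \<Sum>q\<in>UNIV. \<Sum>d\<in>UNIV.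
       ginv G x $ a $ p * ginv G x $ c $ q * weyl G x p q b d * G x $ d $ e)"

text \<open>The Weyl endomorphism psi^{be} |-> C^{ac}_{be} psi^{be}, as a real matrix acting on
  component arrays psi indexed by pairs of coordinate indices.\<close>
definition weyl_endo :: "(real^'n::finite \<Rightarrow> real^'n^'n) \<Rightarrow> real^'n \<Rightarrow> real^('n \<times> 'n)^('n \<times> 'n)" where
  "weyl_endo G x = (\<chi> ac. \<chi> be. weyl_uudd G x (fst ac) (snd ac) (fst be) (snd be))"

definition bivectors :: "(real^('n::finite \<times> 'n)) set" where
  "bivectors = {\<psi>. \<forall>i j. \<psi> $ (i, j) = - \<psi> $ (j, i)}"

definition weyl_invertible :: "(real^'n::finite \<Rightarrow> real^'n^'n) \<Rightarrow> real^'n \<Rightarrow> bool" where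
  "weyl_invertible G x \<longleftrightarrow> bij_betw (\<lambda>\<psi>. weyl_endo G x *v \<psi>) bivectors bivectors"

definition is_MP_inverse :: "real^'n::finite^'m::finite \<Rightarrow> real^'m^'n \<Rightarrow> bool" where
  "is_MP_inverse A B \<longleftrightarrow> A ** B ** A = A \<and> B ** A ** B = B \<and>
     transpose (A ** B) = A ** B \<and> transpose (B ** A) = B ** A"

definition MP_inverse :: "real^'n::finite^'m::finite \<Rightarrow> real^'m^'n" where
  "MP_inverse A = (THE B. is_MP_inverse A B)"

text \<open>(W^+)^{be}_{ac} is the entry (be),(ac) of the pseudo-inverse matrix;
  (W^+)_{qp}^{rs} = g_{qm} g_{pn} (W^+)^{mn}_{uv} g^{ur} g^{vs}.\<close>
definition pinv_dduu :: "(real^'n::finite \<Rightarrow> real^'n^'n) \<Rightarrow> real^'n \<Rightarrow> 'n \<Rightarrow> 'n \<Rightarrow> 'n \<Rightarrow> 'n \<Rightarrow> real" where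
  "pinv_dduu G x q p r s = (\<Sum>m\<in>UNIV. \<Sum>n\<in>UNIV. \<Sum>u\<in>UNIV. \<Sum>v\<in>UNIV.
      G x $ q $ m * G x $ p $ n * MP_inverse (weyl_endo G x) $ (m, n) $ (u, v)
      * ginv G x $ u $ r * ginv G x $ v $ s)"

definition weyl_dduu :: "(real^'n::finite \<Rightarrow> real^'n^'n) \<Rightarrow> real^'n \<Rightarrow> 'n \<Rightarrow> 'n \<Rightarrow> 'n \<Rightarrow> 'n \<Rightarrow> real" where
  "weyl_dduu G x b e q p = (\<Sum>m\<in>UNIV. \<Sum>n\<in>UNIV. \<Sum>u\<in>UNIV. \<Sum>v\<in>UNIV.
      G x $ b $ m * G x $ e $ n * weyl_uudd G x m n u v * ginv G x $ u $ q * ginv G x $ v $ p)"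

definition nabla_schouten :: "(real^'n::finite \<Rightarrow> real^'n^'n) \<Rightarrow> real^'n \<Rightarrow> 'n \<Rightarrow> 'n \<Rightarrow> 'n \<Rightarrow> real" where
  "nabla_schouten G x r s a = pd r (\<lambda>y. schouten G y s a) x
     - (\<Sum>k\<in>UNIV. christoffel G x k r s * schouten G x k a + christoffel G x k r a * schouten G x s k)"

definition alt_nabla_schouten :: "(real^'n::finite \<Rightarrow> real^'n^'n) \<Rightarrow> real^'n \<Rightarrow> 'n \<Rightarrow> 'n \<Rightarrow> 'n \<Rightarrow> real" where
  "alt_nabla_schouten G x r s a = (nabla_schouten G x r s a - nabla_schouten G x s r a) / 2"

definition einstein_on :: "(real^'n::finite) set \<Rightarrow> (real^'n \<Rightarrow> real^'n^'n) \<Rightarrow> bool" where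
  "einstein_on U G \<longleftrightarrow> (\<exists>lam::real. \<forall>x\<in>U. \<forall>a b. ricci G x a b = lam * G x $ a $ b)"

end

theory Submission
  imports Defs
begin


lemma pd_hasD:
  assumes "(f has_derivative f') (at x)"
  shows "pd i f x = f' (axis i 1)"
proof -
  have l: "linear f'" using assms has_derivative_linear by blast
  have d1: "((\<lambda>t::real. x + t *\<^sub>R axis i 1) has_derivative (\<lambda>t. t *\<^sub>R axis i 1)) (at 0)"
    by (auto intro!: derivative_eq_intros)
  have "((\<lambda>t. f (x + t *\<^sub>R axis i 1)) has_derivative (\<lambda>t. f' (t *\<^sub>R axis i 1))) (at 0)"
    using has_derivative_compose[OF d1] assms by simp
  hence "((\<lambda>t. f (x + t *\<^sub>R axis i 1)) has_vector_derivative f' (axis i 1)) (at 0)"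
    unfolding has_vector_derivative_def using linear_scale[OF l] by simp
  thus ?thesis unfolding pd_def by (rule vector_derivative_at)
qed

lemma pd_frechet:
  assumes "f differentiable (at x)"
  shows "pd i f x = frechet_derivative f (at x) (axis i 1)"
  using pd_hasD assms frechet_derivative_works by blast

lemma pd_local:
  assumes "open U" "x \<in> U" "\<And>y. y \<in> U \<Longrightarrow> f y = h y"
  shows "pd i f x = pd i h x"
proof -
  let ?l = "\<lambda>t::real. x + t *\<^sub>R axis i 1"
  have "open (?l -` U)"
    by (rule open_vimage[OF assms(1)]) (auto intro!: continuous_intros)
  moreover have "0 \<in> ?l -` U" using assms(2) by simp
  ultimately have "\<forall>\<^sub>F t in nhds 0. ?l t \<in> U"
    using eventually_nhds by blast
  hence "\<forall>\<^sub>F t in nhds 0. t \<in> UNIV \<longrightarrow> f (?l t) = h (?l t)"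
    by eventually_elim (simp add: assms(3))
  hence "vector_derivative (\<lambda>t. f (?l t)) (at 0 within UNIV) = vector_derivative (\<lambda>t. h (?l t)) (at 0 within UNIV)"
    by (intro vector_derivative_cong_eq) auto
  thus ?thesis unfolding pd_def by simp
qed

lemma diff_local:
  assumes "open U" "x \<in> U" "\<And>y. y \<in> U \<Longrightarrow> f y = h y" "f differentiable (at x)"
  shows "h differentiable (at x)"
  using assms has_derivative_transform_within_open unfolding differentiable_def by metis

lemma pd_add:
  assumes "f differentiable (at x)" "h differentiable (at x)"
  shows "pd i (\<lambda>y. f y + h y) x = pd i f x + pd i h x"
proof -
  obtain F H where F: "(f has_derivative F) (at x)" and H: "(h has_derivative H) (at x)"
    using assms unfolding differentiable_def by blast
  show ?thesis using pd_hasD[OF F] pd_hasD[OF H] pd_hasD[OF has_derivative_add[OF F H]] by simp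
qed

lemma pd_diff:
  assumes "f differentiable (at x)" "h differentiable (at x)"
  shows "pd i (\<lambda>y. f y - h y) x = pd i f x - pd i h x"
proof -
  obtain F H where F: "(f has_derivative F) (at x)" and H: "(h has_derivative H) (at x)"
    using assms unfolding differentiable_def by blast
  show ?thesis using pd_hasD[OF F] pd_hasD[OF H] pd_hasD[OF has_derivative_diff[OF F H]] by simp
qed

lemma pd_minus:
  assumes "f differentiable (at x)"
  shows "pd i (\<lambda>y. - f y) x = - pd i f x"
proof -
  obtain F where F: "(f has_derivative F) (at x)"
    using assms unfolding differentiable_def by blast
  show ?thesis using pd_hasD[OF F] pd_hasD[OF has_derivative_minus[OF F]] by simp
qed

lemma pd_const: "pd i (\<lambda>y. c) x = 0"
proof -
  have "pd i (\<lambda>y. c) x = (\<lambda>v. 0) (axis i 1)" by (rule pd_hasD) (rule has_derivative_const)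
  thus ?thesis by simp
qed

lemma pd_mult:
  fixes f h :: "real^'n::finite \<Rightarrow> real"
  assumes "f differentiable (at x)" "h differentiable (at x)"
  shows "pd i (\<lambda>y. f y * h y) x = pd i f x * h x + f x * pd i h x"
proof -
  obtain F H where F: "(f has_derivative F) (at x)" and H: "(h has_derivative H) (at x)"
    using assms unfolding differentiable_def by blast
  show ?thesis using pd_hasD[OF F] pd_hasD[OF H] pd_hasD[OF has_derivative_mult[OF F H]] by simp
qed

lemma pd_scaleR:
  fixes f :: "real^'n::finite \<Rightarrow> real" and h :: "real^'n \<Rightarrow> 'a::real_normed_vector"
  assumes "f differentiable (at x)" "h differentiable (at x)"
  shows "pd i (\<lambda>y. f y *\<^sub>R h y) x = pd i f x *\<^sub>R h x + f x *\<^sub>R pd i h x"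
proof -
  obtain F H where F: "(f has_derivative F) (at x)" and H: "(h has_derivative H) (at x)"
    using assms unfolding differentiable_def by blast
  show ?thesis using pd_hasD[OF F] pd_hasD[OF H] pd_hasD[OF has_derivative_scaleR[OF F H]] by simp
qed

lemma pd_inverse:
  fixes f :: "real^'n::finite \<Rightarrow> real"
  assumes "f differentiable (at x)" "f x \<noteq> 0"
  shows "pd i (\<lambda>y. inverse (f y)) x = - pd i f x / (f x)^2"
proof -
  obtain F where F: "(f has_derivative F) (at x)"
    using assms unfolding differentiable_def by blast
  show ?thesis using pd_hasD[OF F] pd_hasD[OF Deriv.has_derivative_inverse[OF assms(2) F]]
    by (simp add: power2_eq_square field_simps)
qed

lemma pd_sum:
  assumes "finite I" "\<And>k. k \<in> I \<Longrightarrow> f k differentiable (at x)"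
  shows "pd i (\<lambda>y. \<Sum>k\<in>I. f k y) x = (\<Sum>k\<in>I. pd i (f k) x)"
proof -
  have "\<forall>k\<in>I. (f k has_derivative frechet_derivative (f k) (at x)) (at x)"
    using assms(2) frechet_derivative_works by blast
  hence "((\<lambda>y. \<Sum>k\<in>I. f k y) has_derivative (\<lambda>v. \<Sum>k\<in>I. frechet_derivative (f k) (at x) v)) (at x)"
    by (intro has_derivative_sum) auto
  from pd_hasD[OF this] show ?thesis
    by (metis (no_types, lifting) assms(2) pd_frechet sum.cong)
qed

lemma pd_nth:
  fixes f :: "real^'n::finite \<Rightarrow> 'a::real_normed_vector^'m::finite"
  assumes "f differentiable (at x)"
  shows "pd i (\<lambda>y. f y $ a) x = pd i f x $ a"
proof -
  obtain F where F: "(f has_derivative F) (at x)"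
    using assms unfolding differentiable_def by blast
  have "((\<lambda>y. f y $ a) has_derivative (\<lambda>v. F v $ a)) (at x)"
    using bounded_linear.has_derivative[OF bounded_linear_vec_nth F] .
  from pd_hasD[OF this] pd_hasD[OF F] show ?thesis by simp
qed

lemma differentiable_nth:
  fixes f :: "real^'n::finite \<Rightarrow> 'a::real_normed_vector^'m::finite"
  assumes "f differentiable (at x)"
  shows "(\<lambda>y. f y $ a) differentiable (at x)"
proof -
  obtain F where F: "(f has_derivative F) (at x)"
    using assms unfolding differentiable_def by blast
  have "((\<lambda>y. f y $ a) has_derivative (\<lambda>v. F v $ a)) (at x)"
    using bounded_linear.has_derivative[OF bounded_linear_vec_nth F] .
  thus ?thesis unfolding differentiable_def by blast
qed

lemma smooth_diff: "smooth_on U f \<Longrightarrow> y \<in> U \<Longrightarrow> iter_pd is f differentiable (at y)"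
  unfolding smooth_on_def by blast

lemma iter_pd_append: "iter_pd (is @ [i]) f = iter_pd is (pd i f)"
  by (induction "is") auto

lemma smooth_pd: "smooth_on U f \<Longrightarrow> smooth_on U (pd i f)"
  unfolding smooth_on_def by (metis iter_pd_append)

lemma smooth_nth:
  fixes f :: "real^'n::finite \<Rightarrow> 'a::real_normed_vector^'m::finite"
  assumes U: "open U" and sm: "smooth_on U f"
  shows "smooth_on U (\<lambda>y. f y $ a)"
proof -
  have eq: "\<forall>y\<in>U. iter_pd is (\<lambda>y. f y $ a) y = iter_pd is f y $ a" for "is"
  proof (induction "is")
    case Nil then show ?case by simp
  next
    case (Cons i "is")
    show ?case
    proof
      fix y assume y: "y \<in> U"
      have "iter_pd (i # is) (\<lambda>y. f y $ a) y = pd i (\<lambda>z. iter_pd is f z $ a) y"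
        using pd_local[OF U y, of "iter_pd is (\<lambda>y. f y $ a)"] Cons by simp
      also have "\<dots> = iter_pd (i # is) f y $ a"
        using pd_nth[OF smooth_diff[OF sm y, of "is"]] by simp
      finally show "iter_pd (i # is) (\<lambda>y. f y $ a) y = iter_pd (i # is) f y $ a" .
    qed
  qed
  show ?thesis unfolding smooth_on_def
  proof (intro allI ballI)
    fix "is" y assume y: "y \<in> U"
    have "(\<lambda>z. iter_pd is f z $ a) differentiable (at y)"
      using differentiable_nth smooth_diff[OF sm y] by blast
    thus "iter_pd is (\<lambda>y. f y $ a) differentiable (at y)"
      using diff_local[OF U y] eq by (metis (no_types, lifting))
  qed
qed


lemma line_pd:
  fixes f :: "real^'n::finite \<Rightarrow> real"
  assumes "f differentiable (at (y + s *\<^sub>R axis i 1))"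
  shows "((\<lambda>t. f (y + t *\<^sub>R axis i 1)) has_real_derivative pd i f (y + s *\<^sub>R axis i 1)) (at s)"
proof -
  let ?p = "y + s *\<^sub>R axis i 1"
  obtain F where F: "(f has_derivative F) (at ?p)"
    using assms unfolding differentiable_def by blast
  have l: "linear F" using F has_derivative_linear by blast
  have d1: "((\<lambda>t::real. y + t *\<^sub>R axis i 1) has_derivative (\<lambda>t. t *\<^sub>R axis i 1)) (at s)"
    by (auto intro!: derivative_eq_intros)
  have "((\<lambda>t. f (y + t *\<^sub>R axis i 1)) has_derivative (\<lambda>t. F (t *\<^sub>R axis i 1))) (at s)"
    using has_derivative_compose[OF d1 F] by simp
  moreover have "(\<lambda>t. F (t *\<^sub>R axis i 1)) = (*) (F (axis i 1))"
    by (rule ext) (simp add: linear_scale[OF l])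
  ultimately show ?thesis
    unfolding has_field_derivative_def pd_hasD[OF F] by simp
qed

lemma norm_axis1: "norm (axis i (1::real) :: real^'n::finite) = 1"
  by simp

lemma schwarz_step:
  fixes f :: "real^'n::finite \<Rightarrow> real"
  assumes sm: "smooth_on U f" and sub: "cball x (2*h) \<subseteq> U" and h: "0 < h"
  shows "\<exists>p. dist p x \<le> 2*h \<and>
    f (x + h *\<^sub>R axis i 1 + h *\<^sub>R axis j 1) - f (x + h *\<^sub>R axis j 1) - f (x + h *\<^sub>R axis i 1) + f x
      = h^2 * pd j (pd i f) p"
proof -
  define e1 :: "real^'n" where "e1 = axis i 1"
  define e2 :: "real^'n" where "e2 = axis j 1"
  have dd: "dist (x + s *\<^sub>R e1 + t *\<^sub>R e2) x \<le> 2*h" if "0 \<le> s" "s \<le> h" "0 \<le> t" "t \<le> h" for s t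
  proof -
    have "dist (x + s *\<^sub>R e1 + t *\<^sub>R e2) x = norm (s *\<^sub>R e1 + t *\<^sub>R e2)"
      by (simp add: dist_norm)
    also have "\<dots> \<le> norm (s *\<^sub>R e1) + norm (t *\<^sub>R e2)" by (rule norm_triangle_ineq)
    also have "\<dots> = s + t" using that by (simp add: e1_def e2_def norm_axis1)
    finally show ?thesis using that by simp
  qed
  have inU: "x + s *\<^sub>R e1 + t *\<^sub>R e2 \<in> U" if "0 \<le> s" "s \<le> h" "0 \<le> t" "t \<le> h" for s t
    using dd[OF that] sub by (auto simp: dist_commute)
  have df: "f differentiable (at z)" if "z \<in> U" for z
    using smooth_diff[OF sm that, of "[]"] by simp
  have dfi: "pd i f differentiable (at z)" if "z \<in> U" for z
    using smooth_diff[OF sm that, of "[i]"] by simp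
  define \<phi> where "\<phi> s = f ((x + h *\<^sub>R e2) + s *\<^sub>R e1) - f (x + s *\<^sub>R e1)" for s
  define \<phi>' where "\<phi>' s = pd i f ((x + h *\<^sub>R e2) + s *\<^sub>R e1) - pd i f (x + s *\<^sub>R e1)" for s
  have "(\<phi> has_real_derivative \<phi>' s) (at s)" if "0 \<le> s" "s \<le> h" for s
  proof -
    have p1: "(x + h *\<^sub>R e2) + s *\<^sub>R e1 \<in> U" using inU[OF that, of h] h
      by (simp add: algebra_simps)
    have p2: "x + s *\<^sub>R e1 \<in> U" using inU[OF that, of 0] h by simp
    show ?thesis unfolding \<phi>_def \<phi>'_def e1_def
      by (intro DERIV_diff line_pd) (use df p1 p2 e1_def in auto)
  qed
  then obtain \<xi> where \<xi>: "0 < \<xi>" "\<xi> < h" "\<phi> h - \<phi> 0 = (h - 0) * \<phi>' \<xi>"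
    using MVT2[of 0 h \<phi> \<phi>'] h by auto
  define \<psi> where "\<psi> t = pd i f ((x + \<xi> *\<^sub>R e1) + t *\<^sub>R e2)" for t
  have "(\<psi> has_real_derivative pd j (pd i f) ((x + \<xi> *\<^sub>R e1) + t *\<^sub>R e2)) (at t)"
    if "0 \<le> t" "t \<le> h" for t
  proof -
    have p: "(x + \<xi> *\<^sub>R e1) + t *\<^sub>R e2 \<in> U" using inU[of \<xi> t] \<xi> that by simp
    show ?thesis unfolding \<psi>_def e2_def
      by (rule line_pd) (use dfi p e2_def in auto)
  qed
  then obtain \<eta> where \<eta>: "0 < \<eta>" "\<eta> < h"
    "\<psi> h - \<psi> 0 = (h - 0) * pd j (pd i f) ((x + \<xi> *\<^sub>R e1) + \<eta> *\<^sub>R e2)"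
    using MVT2[of 0 h \<psi> "\<lambda>t. pd j (pd i f) ((x + \<xi> *\<^sub>R e1) + t *\<^sub>R e2)"] h by auto
  have "\<phi>' \<xi> = \<psi> h - \<psi> 0" unfolding \<phi>'_def \<psi>_def by (simp add: algebra_simps)
  have "f (x + h *\<^sub>R axis i 1 + h *\<^sub>R axis j 1) - f (x + h *\<^sub>R axis j 1) - f (x + h *\<^sub>R axis i 1) + f x
     = \<phi> h - \<phi> 0" unfolding \<phi>_def e1_def e2_def by (simp add: algebra_simps)
  also have "\<dots> = h^2 * pd j (pd i f) ((x + \<xi> *\<^sub>R e1) + \<eta> *\<^sub>R e2)"
    using \<xi>(3) \<eta>(3) \<open>\<phi>' \<xi> = \<psi> h - \<psi> 0\<close> by (simp add: power2_eq_square)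
  finally show ?thesis using dd[of \<xi> \<eta>] \<xi> \<eta> by (intro exI[of _ "(x + \<xi> *\<^sub>R e1) + \<eta> *\<^sub>R e2"]) auto
qed

lemma schwarz:
  fixes f :: "real^'n::finite \<Rightarrow> real"
  assumes U: "open U" and x: "x \<in> U" and sm: "smooth_on U f"
  shows "pd i (pd j f) x = pd j (pd i f) x"
proof (rule ccontr)
  assume ne: "pd i (pd j f) x \<noteq> pd j (pd i f) x"
  define A where "A = pd j (pd i f)"
  define B where "B = pd i (pd j f)"
  define \<epsilon> where "\<epsilon> = \<bar>A x - B x\<bar> / 2"
  have e: "\<epsilon> > 0" using ne by (simp add: \<epsilon>_def A_def B_def)
  have cA: "isCont A x" unfolding A_def
    using differentiable_imp_continuous_within smooth_diff[OF sm x, of "[j,i]"] by simp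
  have cB: "isCont B x" unfolding B_def
    using differentiable_imp_continuous_within smooth_diff[OF sm x, of "[i,j]"] by simp
  obtain dA where dA: "dA > 0" "\<And>p. dist p x < dA \<Longrightarrow> dist (A p) (A x) < \<epsilon>"
    using cA e unfolding continuous_at_eps_delta by blast
  obtain dB where dB: "dB > 0" "\<And>p. dist p x < dB \<Longrightarrow> dist (B p) (B x) < \<epsilon>"
    using cB e unfolding continuous_at_eps_delta by blast
  obtain r where r: "r > 0" "cball x r \<subseteq> U" using U x open_contains_cball by blast
  define h where "h = min r (min dA dB) / 3"
  have h: "h > 0" using r dA dB by (simp add: h_def)
  have sub: "cball x (2*h) \<subseteq> U" using r h_def h by (auto simp: subset_eq)
  obtain p where p: "dist p x \<le> 2*h"
    "f (x + h *\<^sub>R axis i 1 + h *\<^sub>R axis j 1) - f (x + h *\<^sub>R axis j 1) - f (x + h *\<^sub>R axis i 1) + f x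
      = h^2 * A p"
    using schwarz_step[OF sm sub h, of i j] A_def by blast
  obtain q where q: "dist q x \<le> 2*h"
    "f (x + h *\<^sub>R axis j 1 + h *\<^sub>R axis i 1) - f (x + h *\<^sub>R axis i 1) - f (x + h *\<^sub>R axis j 1) + f x
      = h^2 * B q"
    using schwarz_step[OF sm sub h, of j i] B_def by blast
  have "h^2 * A p = h^2 * B q" using p(2) q(2) by (simp add: algebra_simps)
  hence AB: "A p = B q" using h by simp
  have "dist p x < dA" using p(1) h_def dA h by (simp add: min_def split: if_splits)
  hence 1: "\<bar>A p - A x\<bar> < \<epsilon>" using dA by (simp add: dist_real_def)
  have "dist q x < dB" using q(1) h_def dB h by (simp add: min_def split: if_splits)
  hence 2: "\<bar>B q - B x\<bar> < \<epsilon>" using dB by (simp add: dist_real_def)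
  have "\<bar>A x - B x\<bar> < 2 * \<epsilon>" using 1 2 AB by linarith
  thus False unfolding \<epsilon>_def by simp
qed


definition prj :: "'a::euclidean_space set \<Rightarrow> 'a \<Rightarrow> 'a" where
  "prj S x = (SOME y. y \<in> span S \<and> (\<forall>w\<in>span S. (x - y) \<bullet> w = 0))"

lemma prj: "prj S x \<in> span S \<and> (\<forall>w\<in>span S. (x - prj S x) \<bullet> w = 0)"
proof -
  obtain y z where "y \<in> span S" "\<And>w. w \<in> span S \<Longrightarrow> orthogonal z w" "x = y + z"
    using orthogonal_subspace_decomp_exists by blast
  hence "\<exists>y. y \<in> span S \<and> (\<forall>w\<in>span S. (x - y) \<bullet> w = 0)"
    by (intro exI[of _ y]) (auto simp: orthogonal_def)
  thus ?thesis unfolding prj_def by (rule someI_ex)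
qed

lemma prj_unique:
  assumes "y \<in> span S" "\<forall>w\<in>span S. (x - y) \<bullet> w = 0"
  shows "prj S x = y"
proof -
  let ?d = "prj S x - y"
  have d: "?d \<in> span S" using prj assms(1) span_diff by blast
  have "(x - y) \<bullet> ?d = 0" using assms(2) d by blast
  moreover have "(x - prj S x) \<bullet> ?d = 0" using prj d by blast
  ultimately have "?d \<bullet> ?d = 0" by (simp add: inner_diff_left inner_diff_right)
  thus ?thesis by simp
qed

lemma prj_add: "prj S (x1 + x2) = prj S x1 + prj S x2"
  by (rule prj_unique) (use prj[of S x1] prj[of S x2] in \<open>auto intro: span_add simp: algebra_simps inner_add_left\<close>)

lemma prj_scale: "prj S (c *\<^sub>R x) = c *\<^sub>R prj S x"
proof (rule prj_unique)
  show "c *\<^sub>R prj S x \<in> span S" using prj span_scale by blast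
  show "\<forall>w\<in>span S. (c *\<^sub>R x - c *\<^sub>R prj S x) \<bullet> w = 0"
    using prj[of S x] by (metis inner_scaleR_left mult_zero_right scaleR_right_diff_distrib)
qed

lemma prj_sa: "prj S x \<bullet> z = x \<bullet> prj S z"
proof -
  have 1: "(x - prj S x) \<bullet> prj S z = 0" using prj by blast
  have 2: "(z - prj S z) \<bullet> prj S x = 0" using prj by blast
  have a: "x \<bullet> prj S z = prj S x \<bullet> prj S z" using 1 by (simp add: inner_diff_left)
  have b: "z \<bullet> prj S x = prj S z \<bullet> prj S x" using 2 by (simp add: inner_diff_left)
  show ?thesis using a b by (simp add: inner_commute)
qed

lemma adj: "((A::real^'n::finite^'m::finite) *v x) \<bullet> y = x \<bullet> (transpose A *v y)"
proof -
  have "(A *v x) \<bullet> y = (\<Sum>i\<in>UNIV. \<Sum>j\<in>UNIV. A$i$j * x$j * y$i)"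
    by (simp add: inner_vec_def matrix_vector_mult_def sum_distrib_right)
  also have "\<dots> = (\<Sum>j\<in>UNIV. \<Sum>i\<in>UNIV. A$i$j * x$j * y$i)" by (rule sum.swap)
  also have "\<dots> = x \<bullet> (transpose A *v y)"
    by (simp add: inner_vec_def matrix_vector_mult_def transpose_def sum_distrib_left mult_ac)
  finally show ?thesis .
qed

lemma sym_from_sa:
  fixes M :: "real^'n::finite^'n"
  assumes "\<And>x y. (M *v x) \<bullet> y = x \<bullet> (M *v y)"
  shows "transpose M = M"
proof -
  have "M $ i $ j = M $ j $ i" for i j
    using assms[of "axis j 1" "axis i 1"]
    by (simp add: matrix_vector_mult_basis inner_axis inner_axis' column_def)
  thus ?thesis by (simp add: vec_eq_iff transpose_def)
qed

lemma range_span: "span (range ((*v) (M::real^'n::finite^'m::finite))) = range ((*v) M)"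
proof -
  have "subspace (range ((*v) M))"
    unfolding subspace_def
  proof (intro conjI ballI allI)
    show "0 \<in> range ((*v) M)" by (metis matrix_vector_mult_0_right rangeI)
    fix x y assume "x \<in> range ((*v) M)" "y \<in> range ((*v) M)"
    then obtain a b where "x = M *v a" "y = M *v b" by blast
    thus "x + y \<in> range ((*v) M)" by (metis matrix_vector_right_distrib rangeI)
  next
    fix c x assume "x \<in> range ((*v) M)"
    then obtain a where "x = M *v a" by blast
    thus "c *\<^sub>R x \<in> range ((*v) M)"
      by (metis linear_cmul matrix_vector_mul_linear rangeI)
  qed
  thus ?thesis by (simp add: span_eq_iff)
qed

lemma MP_exists: "\<exists>B. is_MP_inverse (A::real^'n::finite^'m::finite) B"
proof -
  define V where "V = range ((*v) (transpose A))"
  define W where "W = range ((*v) A)"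
  have sV: "span V = V" unfolding V_def by (rule range_span)
  have sW: "span W = W" unfolding W_def by (rule range_span)
  have subV: "subspace V" using sV by (metis subspace_span)
  have inj: "v = 0" if vV: "v \<in> V" and Av: "A *v v = 0" for v
  proof -
    obtain t where t: "v = transpose A *v t" using vV unfolding V_def by blast
    have "v \<bullet> v = t \<bullet> (A *v v)" using adj[of "transpose A" t v] t
      by (simp add: inner_commute)
    thus ?thesis using Av by simp
  qed
  have ker: "A *v (x - prj V x) = 0" for x
  proof -
    let ?d = "x - prj V x"
    have "(A *v ?d) \<bullet> t = 0" for t
    proof -
      have "transpose A *v t \<in> span V" using sV V_def by blast
      hence "?d \<bullet> (transpose A *v t) = 0" using prj by blast
      thus ?thesis by (simp add: adj)
    qed
    thus ?thesis by (metis inner_eq_zero_iff)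
  qed
  have AprjV: "A *v prj V x = A *v x" for x
    using ker[of x] by (simp add: matrix_vector_mult_diff_distrib)
  define Bf where "Bf y = prj V (SOME z. A *v z = prj W y)" for y
  have Bf: "Bf y \<in> V \<and> A *v Bf y = prj W y" for y
  proof -
    have "prj W y \<in> W" using prj[of W y] sW by simp
    hence "\<exists>z. A *v z = prj W y" unfolding W_def by (metis rangeE)
    hence "A *v (SOME z. A *v z = prj W y) = prj W y" by (rule someI_ex)
    hence "A *v Bf y = prj W y" unfolding Bf_def by (simp only: AprjV)
    moreover have "Bf y \<in> V" unfolding Bf_def using prj[of V] sV by simp
    ultimately show ?thesis by simp
  qed
  have Buniq: "v = Bf y" if "v \<in> V" "A *v v = prj W y" for v y
  proof -
    have "v - Bf y \<in> V" using that(1) Bf subV subspace_diff by blast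
    moreover have "A *v (v - Bf y) = 0" using that(2) Bf by (simp add: matrix_vector_mult_diff_distrib)
    ultimately have "v - Bf y = 0" by (rule inj)
    thus ?thesis by simp
  qed
  have lin: "linear Bf"
  proof (rule linearI)
    fix y1 y2
    have "Bf y1 + Bf y2 \<in> V" using Bf subV subspace_add by blast
    moreover have "A *v (Bf y1 + Bf y2) = prj W (y1 + y2)"
      using Bf by (simp add: matrix_vector_right_distrib prj_add)
    ultimately show "Bf (y1 + y2) = Bf y1 + Bf y2" by (rule Buniq[symmetric])
  next
    fix c y
    have "c *\<^sub>R Bf y \<in> V" using Bf subV subspace_scale by blast
    moreover have "A *v (c *\<^sub>R Bf y) = prj W (c *\<^sub>R y)"
      using Bf by (simp add: prj_scale matrix_vector_mult_scaleR)
    ultimately show "Bf (c *\<^sub>R y) = c *\<^sub>R Bf y" by (rule Buniq[symmetric])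
  qed
  define B where "B = matrix Bf"
  have Bv: "B *v y = Bf y" for y
    unfolding B_def by (rule matrix_works) (simp add: linear_matrix_vector_mul_eq lin)
  have AB: "(A ** B) *v y = prj W y" for y
    by (simp add: matrix_vector_mul_assoc[symmetric] Bv Bf)
  have BA: "(B ** A) *v x = prj V x" for x
  proof -
    have "A *v x \<in> span W" using sW W_def by blast
    hence pw: "prj W (A *v x) = A *v x" by (intro prj_unique) auto
    have pV: "prj V x \<in> V" using prj[of V x] sV by metis
    have "prj V x = Bf (A *v x)"
      by (rule Buniq[OF pV]) (simp add: AprjV pw)
    thus ?thesis by (simp add: matrix_vector_mul_assoc[symmetric] Bv)
  qed
  have 1: "A ** B ** A = A"
  proof -
    have "(A ** B ** A) *v x = A *v x" for x
    proof -
      have "A *v x \<in> span W" using sW W_def by blast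
      hence pw: "prj W (A *v x) = A *v x" by (intro prj_unique) auto
      show ?thesis using AB[of "A *v x"] pw by (simp add: matrix_vector_mul_assoc[symmetric])
    qed
    thus ?thesis by (simp add: matrix_eq)
  qed
  have 2: "B ** A ** B = B"
  proof -
    have "(B ** A ** B) *v y = B *v y" for y
    proof -
      have "Bf y \<in> span V" using Bf sV by blast
      hence pv: "prj V (Bf y) = Bf y" by (intro prj_unique) auto
      show ?thesis using BA[of "B *v y"] pv Bv by (simp add: matrix_vector_mul_assoc[symmetric])
    qed
    thus ?thesis by (simp add: matrix_eq)
  qed
  have 3: "transpose (A ** B) = A ** B"
    by (rule sym_from_sa) (simp add: AB prj_sa)
  have 4: "transpose (B ** A) = B ** A"
    by (rule sym_from_sa) (simp add: BA prj_sa)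
  show ?thesis unfolding is_MP_inverse_def using 1 2 3 4 by blast
qed

lemma MP_unique:
  assumes "is_MP_inverse (A::real^'n::finite^'m::finite) B" "is_MP_inverse A C"
  shows "B = C"
proof -
  have b: "A ** B ** A = A" "B ** A ** B = B" "transpose (A ** B) = A ** B" "transpose (B ** A) = B ** A"
    using assms(1) unfolding is_MP_inverse_def by auto
  have c: "A ** C ** A = A" "C ** A ** C = C" "transpose (A ** C) = A ** C" "transpose (C ** A) = C ** A"
    using assms(2) unfolding is_MP_inverse_def by auto
  have "B = B ** (A ** B)" using b(2) by (simp add: matrix_mul_assoc)
  also have "\<dots> = B ** transpose (A ** B)" using b(3) by simp
  also have "\<dots> = B ** transpose B ** transpose A" by (simp add: matrix_transpose_mul matrix_mul_assoc)
  also have "\<dots> = B ** transpose B ** transpose (A ** C ** A)" using c(1) by simp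
  also have "\<dots> = B ** transpose (A ** B) ** transpose (A ** C)"
    by (simp add: matrix_transpose_mul matrix_mul_assoc)
  also have "\<dots> = B ** A ** B ** A ** C" using b(3) c(3) by (simp add: matrix_mul_assoc)
  also have "\<dots> = B ** A ** C" using b(2) by simp
  finally have 1: "B = B ** A ** C" .
  have "C = (C ** A) ** C" using c(2) by simp
  also have "\<dots> = transpose (C ** A) ** C" using c(4) by simp
  also have "\<dots> = transpose A ** transpose C ** C" by (simp add: matrix_transpose_mul)
  also have "\<dots> = transpose (A ** B ** A) ** transpose C ** C" using b(1) by simp
  also have "\<dots> = transpose (B ** A) ** transpose (C ** A) ** C"
    by (simp add: matrix_transpose_mul matrix_mul_assoc)
  also have "\<dots> = B ** A ** C ** A ** C" using b(4) c(4) by (simp add: matrix_mul_assoc)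
  also have "\<dots> = B ** A ** C" using c(2) by (metis matrix_mul_assoc)
  finally have 2: "C = B ** A ** C" .
  from 1 2 show ?thesis by simp
qed

lemma MP_inverse: "is_MP_inverse A (MP_inverse (A::real^'n::finite^'m::finite))"
proof -
  obtain B where "is_MP_inverse A B" using MP_exists by blast
  hence "\<exists>!B. is_MP_inverse A B" using MP_unique by blast
  thus ?thesis unfolding MP_inverse_def by (rule theI')
qed


lemma matrix_inv_props:
  fixes A :: "real^'n::finite^'n"
  assumes "det A \<noteq> 0"
  shows "A ** matrix_inv A = mat 1 \<and> matrix_inv A ** A = mat 1"
proof -
  have "invertible A" using assms invertible_det_nz by blast
  hence "\<exists>A'. A ** A' = mat 1 \<and> A' ** A = mat 1" unfolding invertible_def by blast
  thus ?thesis unfolding matrix_inv_def by (rule someI_ex)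
qed

lemma matrix_inv_sym:
  fixes A :: "real^'n::finite^'n"
  assumes "det A \<noteq> 0" "transpose A = A"
  shows "transpose (matrix_inv A) = matrix_inv A"
proof -
  have r: "A ** matrix_inv A = mat 1" and l: "matrix_inv A ** A = mat 1"
    using matrix_inv_props[OF assms(1)] by auto
  have "transpose (matrix_inv A) ** A = mat 1"
    using r assms(2) by (metis matrix_transpose_mul transpose_mat)
  hence "transpose (matrix_inv A) = transpose (matrix_inv A) ** (A ** matrix_inv A)"
    using r by simp
  also have "\<dots> = matrix_inv A"
    using \<open>transpose (matrix_inv A) ** A = mat 1\<close> by (simp add: matrix_mul_assoc)
  finally show ?thesis .
qed

lemma matrix_inv_entry:
  fixes A :: "real^'n::finite^'n"
  assumes d: "det A \<noteq> 0"
  shows "matrix_inv A $ k $ j = det (\<chi> i l. if l = k then axis j 1 $ i else A $ i $ l) / det A"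
proof -
  let ?x = "matrix_inv A *v axis j 1"
  have "A *v ?x = axis j 1"
    using matrix_inv_props[OF d] by (simp add: matrix_vector_mul_assoc)
  hence "?x = (\<chi> k. det (\<chi> i l. if l = k then axis j 1 $ i else A $ i $ l) / det A)"
    using cramer[OF d] by blast
  hence "?x $ k = det (\<chi> i l. if l = k then axis j 1 $ i else A $ i $ l) / det A" by simp
  moreover have "?x $ k = matrix_inv A $ k $ j"
    by (simp add: matrix_vector_mult_basis column_def)
  ultimately show ?thesis by simp
qed

lemma differentiable_prod':
  fixes f :: "'i \<Rightarrow> real^'n::finite \<Rightarrow> real"
  assumes "finite S" "\<And>i. i \<in> S \<Longrightarrow> f i differentiable (at x)"
  shows "(\<lambda>y. \<Prod>i\<in>S. f i y) differentiable (at x)"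
  using assms
proof (induction S rule: finite_induct)
  case empty then show ?case by simp
next
  case (insert a F)
  have "(\<lambda>y. f a y * (\<Prod>i\<in>F. f i y)) differentiable (at x)"
    using insert by (intro differentiable_mult) auto
  thus ?case using insert by simp
qed

lemma det_differentiable:
  fixes M :: "real^'n::finite \<Rightarrow> real^'m::finite^'m"
  assumes "\<And>i l. (\<lambda>y. M y $ i $ l) differentiable (at x)"
  shows "(\<lambda>y. det (M y)) differentiable (at x)"
  unfolding det_def
  by (intro differentiable_sum ballI differentiable_mult differentiable_const differentiable_prod')
     (auto simp: finite_permutations assms)

definition dl :: "'n \<Rightarrow> 'n \<Rightarrow> real" where "dl a b = (if a = b then 1 else 0)"

lemma dl_sym: "dl a b = dl b a" by (simp add: dl_def)

lemma sum_dl_l1 [simp]: "(\<Sum>b\<in>(UNIV::'n::finite set). dl a b * f b) = f a"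
proof -
  have "(\<Sum>b\<in>UNIV. dl a b * f b) = (\<Sum>b\<in>UNIV. if a = b then f b else 0)"
    by (rule sum.cong) (auto simp: dl_def)
  thus ?thesis by (simp add: sum.delta')
qed

lemma sum_dl_l2 [simp]: "(\<Sum>b\<in>(UNIV::'n::finite set). dl b a * f b) = f a"
proof -
  have "(\<Sum>b\<in>UNIV. dl b a * f b) = (\<Sum>b\<in>UNIV. if b = a then f b else 0)"
    by (rule sum.cong) (auto simp: dl_def)
  thus ?thesis by (simp add: sum.delta)
qed

lemma sum_dl_r1 [simp]: "(\<Sum>b\<in>(UNIV::'n::finite set). f b * dl a b) = f a"
proof -
  have "(\<Sum>b\<in>UNIV. f b * dl a b) = (\<Sum>b\<in>UNIV. if a = b then f b else 0)"
    by (rule sum.cong) (auto simp: dl_def)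
  thus ?thesis by (simp add: sum.delta')
qed

lemma sum_dl_r2 [simp]: "(\<Sum>b\<in>(UNIV::'n::finite set). f b * dl b a) = f a"
proof -
  have "(\<Sum>b\<in>UNIV. f b * dl b a) = (\<Sum>b\<in>UNIV. if b = a then f b else 0)"
    by (rule sum.cong) (auto simp: dl_def)
  thus ?thesis by (simp add: sum.delta)
qed

lemma sum_dl_diag: "(\<Sum>b\<in>(UNIV::'n::finite set). dl b b) = real CARD('n::finite)"
  by (simp add: dl_def)

locale met =
  fixes g :: "real^'n::finite \<Rightarrow> real^'n^'n" and U :: "(real^'n) set"
  assumes met: "metric_on U g"
begin

definition gg where "gg y a b = g y $ a $ b"
definition gi where "gi y a b = ginv g y $ a $ b"
definition dg where "dg c y a b = pd c (\<lambda>z. g z $ a $ b) y"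

lemma openU: "open U" using met unfolding metric_on_def by blast
lemma smg: "smooth_on U g" using met unfolding metric_on_def by blast
lemma gsym': "y \<in> U \<Longrightarrow> transpose (g y) = g y" using met unfolding metric_on_def by blast
lemma gdet: "y \<in> U \<Longrightarrow> det (g y) \<noteq> 0" using met unfolding metric_on_def by blast

lemma gsym: "y \<in> U \<Longrightarrow> gg y a b = gg y b a"
proof -
  assume y: "y \<in> U"
  have "transpose (g y) $ a $ b = g y $ a $ b" using gsym'[OF y] by simp
  thus ?thesis unfolding gg_def by (simp add: transpose_def)
qed

lemma gisym: "y \<in> U \<Longrightarrow> gi y a b = gi y b a"
proof -
  assume y: "y \<in> U"
  have "transpose (matrix_inv (g y)) $ a $ b = matrix_inv (g y) $ a $ b"
    using matrix_inv_sym[OF gdet[OF y] gsym'[OF y]] by simp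
  thus ?thesis unfolding gi_def ginv_def by (simp add: transpose_def)
qed

lemma ginv_l: "y \<in> U \<Longrightarrow> (\<Sum>m\<in>UNIV. gi y k m * gg y m n) = dl k n"
proof -
  assume y: "y \<in> U"
  have "(matrix_inv (g y) ** g y) $ k $ n = mat 1 $ k $ n"
    using matrix_inv_props[OF gdet[OF y]] by simp
  thus ?thesis unfolding gi_def gg_def ginv_def dl_def
    by (simp add: matrix_matrix_mult_def mat_def)
qed

lemma ginv_r: "y \<in> U \<Longrightarrow> (\<Sum>m\<in>UNIV. gg y k m * gi y m n) = dl k n"
proof -
  assume y: "y \<in> U"
  have "(g y ** matrix_inv (g y)) $ k $ n = mat 1 $ k $ n"
    using matrix_inv_props[OF gdet[OF y]] by simp
  thus ?thesis unfolding gi_def gg_def ginv_def dl_def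
    by (simp add: matrix_matrix_mult_def mat_def)
qed

lemma sm_gg: "smooth_on U (\<lambda>y. g y $ a $ b)"
  using smooth_nth[OF openU smooth_nth[OF openU smg]] by simp

lemma d_gg: "y \<in> U \<Longrightarrow> (\<lambda>z. g z $ a $ b) differentiable (at y)"
  using smooth_diff[OF sm_gg, of y "[]"] by simp

lemma d_dg: "y \<in> U \<Longrightarrow> (\<lambda>z. dg c z a b) differentiable (at y)"
  using smooth_diff[OF sm_gg, of y "[c]"] unfolding dg_def by simp

lemma gi_cramer: "y \<in> U \<Longrightarrow> ginv g y $ k $ j =
   det (\<chi> i l. if l = k then axis j 1 $ i else g y $ i $ l) / det (g y)"
  unfolding ginv_def using matrix_inv_entry[OF gdet] by blast

lemma d_gi: "y \<in> U \<Longrightarrow> (\<lambda>z. ginv g z $ k $ j) differentiable (at y)"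
proof -
  assume y: "y \<in> U"
  have "(\<lambda>z. det (\<chi> i l. if l = k then axis j 1 $ i else g z $ i $ l) / det (g z)) differentiable (at y)"
  proof (intro differentiable_divide det_differentiable)
    show "det (g y) \<noteq> 0" using gdet[OF y] .
    fix i l
    show "(\<lambda>z. g z $ i $ l) differentiable (at y)" using d_gg[OF y] .
    show "(\<lambda>z. (\<chi> i l. if l = k then axis j 1 $ i else g z $ i $ l) $ i $ l) differentiable (at y)"
      using d_gg[OF y] by (cases "l = k") auto
  qed
  thus ?thesis by (rule diff_local[OF openU y, rotated]) (simp add: gi_cramer)
qed

lemma dgsym: "y \<in> U \<Longrightarrow> dg c y a b = dg c y b a"
  unfolding dg_def using pd_local[OF openU, of y "\<lambda>z. g z $ a $ b" "\<lambda>z. g z $ b $ a"] gsym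
  unfolding gg_def by blast

end


lemma sum_dl_m1 [simp]: "(\<Sum>b\<in>(UNIV::'n::finite set). f b * dl b a * h b) = f a * h a"
  using sum_dl_r2[of "\<lambda>b. f b * h b" a] by (simp add: mult_ac)
lemma sum_dl_m2 [simp]: "(\<Sum>b\<in>(UNIV::'n::finite set). f b * dl a b * h b) = f a * h a"
  using sum_dl_r1[of "\<lambda>b. f b * h b" a] by (simp add: mult_ac)

locale pt =
  fixes G Gi :: "'n::finite \<Rightarrow> 'n \<Rightarrow> real" and \<Gamma> :: "'n \<Rightarrow> 'n \<Rightarrow> 'n \<Rightarrow> real"
    and u :: "'n \<Rightarrow> real" and H :: "'n \<Rightarrow> 'n \<Rightarrow> real"
  assumes Gsym: "G a b = G b a" and Gisym: "Gi a b = Gi b a"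
    and GGi: "(\<Sum>m\<in>UNIV. G a m * Gi m b) = dl a b"
    and GiG: "(\<Sum>m\<in>UNIV. Gi a m * G m b) = dl a b"
    and \<Gamma>sym: "\<Gamma> c a b = \<Gamma> c b a"
    and Hsym: "H a b = H b a"
begin

definition "U d = (\<Sum>e\<in>UNIV. Gi d e * u e)"
definition "uu = (\<Sum>e\<in>UNIV. u e * U e)"
definition "Hs a c = H a c - (\<Sum>e\<in>UNIV. \<Gamma> e a c * u e)"
definition "trH = (\<Sum>b\<in>UNIV. \<Sum>d\<in>UNIV. Gi b d * Hs b d)"
definition "T\<Gamma> e = (\<Sum>b\<in>UNIV. \<Gamma> b b e)"
definition "dG b a c = (\<Sum>e\<in>UNIV. \<Gamma> e b a * G e c) + (\<Sum>e\<in>UNIV. \<Gamma> e b c * G a e)"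
definition "dGi b d e = - (\<Sum>m\<in>UNIV. \<Gamma> d b m * Gi m e) - (\<Sum>m\<in>UNIV. \<Gamma> e b m * Gi d m)"
definition "K d a c = dl d a * u c + dl d c * u a - G a c * U d"
definition "dK b d a c = dl d a * H b c + dl d c * H b a - dG b a c * U d
   - G a c * (\<Sum>e\<in>UNIV. dGi b d e * u e + Gi d e * H b e)"
definition "nn = real CARD('n)"

lemma GU: "(\<Sum>b\<in>UNIV. G a b * U b) = u a"
proof -
  have "(\<Sum>b\<in>UNIV. G a b * U b) = (\<Sum>e\<in>UNIV. (\<Sum>b\<in>UNIV. G a b * Gi b e) * u e)"
    unfolding U_def sum_distrib_left sum_distrib_right mult.assoc by (rule sum.swap)
  thus ?thesis by (simp add: GGi)
qed

lemma GU': "(\<Sum>b\<in>UNIV. U b * G b a) = u a"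
  using GU[of a] by (simp add: Gsym mult.commute)

lemma GU2: "(\<Sum>b\<in>UNIV. G b a * U b) = u a"
  using GU[of a] by (simp add: Gsym)

lemma trK: "(\<Sum>b\<in>UNIV. K b b e) = nn * u e"
proof -
  have "(\<Sum>b\<in>UNIV. K b b e) = (\<Sum>b\<in>UNIV. dl (b::'n) b * u e) + (\<Sum>b\<in>UNIV. dl b e * u b) - (\<Sum>b\<in>UNIV. U b * G b e)"
    unfolding K_def by (simp add: sum.distrib sum_subtractf algebra_simps)
  moreover have "(\<Sum>b\<in>UNIV. dl (b::'n) b * u e) = nn * u e"
    by (simp add: sum_distrib_right[symmetric] sum_dl_diag nn_def)
  ultimately show ?thesis using GU' by simp
qed

lemma p3: "(\<Sum>b\<in>UNIV. \<Sum>e\<in>UNIV. \<Gamma> b b e * K e a c)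
   = T\<Gamma> a * u c + T\<Gamma> c * u a - G a c * (\<Sum>e\<in>UNIV. T\<Gamma> e * U e)"
proof -
  have "(\<Sum>b\<in>UNIV. \<Sum>e\<in>UNIV. \<Gamma> b b e * K e a c) = (\<Sum>e\<in>UNIV. T\<Gamma> e * K e a c)"
    unfolding T\<Gamma>_def sum_distrib_right by (rule sum.swap)
  also have "\<dots> = (\<Sum>e\<in>UNIV. dl e a * (T\<Gamma> e * u c)) + (\<Sum>e\<in>UNIV. dl e c * (T\<Gamma> e * u a))
      - G a c * (\<Sum>e\<in>UNIV. T\<Gamma> e * U e)"
    unfolding K_def by (simp add: sum.distrib sum_subtractf sum_distrib_left algebra_simps)
  also have "\<dots> = T\<Gamma> a * u c + T\<Gamma> c * u a - G a c * (\<Sum>e\<in>UNIV. T\<Gamma> e * U e)" by simp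
  finally show ?thesis .
qed

lemma p4: "(\<Sum>b\<in>UNIV. \<Sum>e\<in>UNIV. K b b e * \<Gamma> e a c) = nn * (\<Sum>e\<in>UNIV. \<Gamma> e a c * u e)"
proof -
  have "(\<Sum>b\<in>UNIV. \<Sum>e\<in>UNIV. K b b e * \<Gamma> e a c) = (\<Sum>e\<in>UNIV. (\<Sum>b\<in>UNIV. K b b e) * \<Gamma> e a c)"
    unfolding sum_distrib_right by (rule sum.swap)
  thus ?thesis by (simp add: trK sum_distrib_left algebra_simps)
qed

lemma p5: "(\<Sum>b\<in>UNIV. \<Sum>e\<in>UNIV. K b b e * K e a c) = nn * (2 * u a * u c - G a c * uu)"
proof -
  have "(\<Sum>b\<in>UNIV. \<Sum>e\<in>UNIV. K b b e * K e a c) = (\<Sum>e\<in>UNIV. (\<Sum>b\<in>UNIV. K b b e) * K e a c)"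
    unfolding sum_distrib_right by (rule sum.swap)
  also have "\<dots> = nn * (\<Sum>e\<in>UNIV. u e * K e a c)" by (simp add: trK sum_distrib_left algebra_simps)
  also have "(\<Sum>e\<in>UNIV. u e * K e a c) = (\<Sum>e\<in>UNIV. dl e a * (u e * u c)) + (\<Sum>e\<in>UNIV. dl e c * (u e * u a))
      - G a c * (\<Sum>e\<in>UNIV. u e * U e)"
    unfolding K_def by (simp add: sum.distrib sum_subtractf sum_distrib_left algebra_simps)
  also have "\<dots> = 2 * u a * u c - G a c * uu" by (simp add: uu_def)
  finally show ?thesis by simp
qed

lemma ss1: "(\<Sum>b\<in>UNIV. \<Sum>e\<in>UNIV. dl b (a::'n) * f b e) = (\<Sum>e\<in>UNIV. f a e)"
  by (subst sum.swap) simp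
lemma ss2: "(\<Sum>b\<in>UNIV. \<Sum>e\<in>UNIV. dl (a::'n) b * f b e) = (\<Sum>e\<in>UNIV. f a e)"
  by (subst sum.swap) simp

lemma p6: "(\<Sum>b\<in>UNIV. \<Sum>e\<in>UNIV. \<Gamma> b a e * K e b c)
   = T\<Gamma> a * u c + (\<Sum>b\<in>UNIV. \<Gamma> b a c * u b) - (\<Sum>b\<in>UNIV. \<Sum>e\<in>UNIV. \<Gamma> b a e * G b c * U e)"
proof -
  have "(\<Sum>b\<in>UNIV. \<Sum>e\<in>UNIV. \<Gamma> b a e * K e b c)
     = (\<Sum>b\<in>UNIV. (\<Sum>e\<in>UNIV. dl e b * (\<Gamma> b a e * u c)) + (\<Sum>e\<in>UNIV. dl e c * (\<Gamma> b a e * u b))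
          - (\<Sum>e\<in>UNIV. \<Gamma> b a e * G b c * U e))"
    unfolding K_def by (simp add: sum.distrib sum_subtractf algebra_simps)
  also have "\<dots> = (\<Sum>b\<in>UNIV. \<Gamma> b b a * u c + \<Gamma> b a c * u b - (\<Sum>e\<in>UNIV. \<Gamma> b a e * G b c * U e))"
    by (simp add: \<Gamma>sym[of _ a])
  also have "\<dots> = T\<Gamma> a * u c + (\<Sum>b\<in>UNIV. \<Gamma> b a c * u b) - (\<Sum>b\<in>UNIV. \<Sum>e\<in>UNIV. \<Gamma> b a e * G b c * U e)"
    by (simp add: sum.distrib sum_subtractf T\<Gamma>_def sum_distrib_right)
  finally show ?thesis .
qed

lemma p7: "(\<Sum>b\<in>UNIV. \<Sum>e\<in>UNIV. K b a e * \<Gamma> e b c)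
   = (\<Sum>e\<in>UNIV. \<Gamma> e a c * u e) + u a * T\<Gamma> c - (\<Sum>b\<in>UNIV. \<Sum>e\<in>UNIV. G a e * U b * \<Gamma> e b c)"
proof -
  have "(\<Sum>b\<in>UNIV. \<Sum>e\<in>UNIV. K b a e * \<Gamma> e b c)
     = (\<Sum>b\<in>UNIV. \<Sum>e\<in>UNIV. dl b a * (u e * \<Gamma> e b c)) + (\<Sum>b\<in>UNIV. \<Sum>e\<in>UNIV. dl b e * (u a * \<Gamma> e b c))
          - (\<Sum>b\<in>UNIV. \<Sum>e\<in>UNIV. G a e * U b * \<Gamma> e b c)"
    unfolding K_def by (simp add: sum.distrib sum_subtractf algebra_simps)
  also have "(\<Sum>b\<in>UNIV. \<Sum>e\<in>UNIV. dl b a * (u e * \<Gamma> e b c)) = (\<Sum>e\<in>UNIV. \<Gamma> e a c * u e)"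
    by (simp only: ss1) (simp add: mult.commute)
  also have "(\<Sum>b\<in>UNIV. \<Sum>e\<in>UNIV. dl b e * (u a * \<Gamma> e b c)) = u a * T\<Gamma> c"
    by (simp add: T\<Gamma>_def sum_distrib_left)
  finally show ?thesis .
qed

lemma p8: "(\<Sum>b\<in>UNIV. \<Sum>e\<in>UNIV. K b a e * K e b c) = (nn + 2) * u a * u c - 2 * G a c * uu"
proof -
  have "(\<Sum>b\<in>UNIV. \<Sum>e\<in>UNIV. K b a e * K e b c) =
     (\<Sum>b\<in>UNIV. \<Sum>e\<in>UNIV. dl b a * (u e * dl e b * u c)) + (\<Sum>b\<in>UNIV. \<Sum>e\<in>UNIV. dl b a * (u e * dl e c * u b))
   - (\<Sum>b\<in>UNIV. \<Sum>e\<in>UNIV. dl b a * (u e * G b c * U e)) + (\<Sum>b\<in>UNIV. \<Sum>e\<in>UNIV. dl (b::'n) e * (u a * dl e b * u c))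
   + (\<Sum>b\<in>UNIV. \<Sum>e\<in>UNIV. dl b e * (u a * dl e c * u b)) - (\<Sum>b\<in>UNIV. \<Sum>e\<in>UNIV. dl b e * (u a * G b c * U e))
   - (\<Sum>b\<in>UNIV. \<Sum>e\<in>UNIV. G a e * U b * dl e b * u c) - (\<Sum>b\<in>UNIV. \<Sum>e\<in>UNIV. G a e * U b * dl e c * u b)
   + (\<Sum>b\<in>UNIV. \<Sum>e\<in>UNIV. G a e * U b * (G b c * U e))"
    unfolding K_def by (simp add: sum.distrib sum_subtractf algebra_simps)
  also have "(\<Sum>b\<in>UNIV. \<Sum>e\<in>UNIV. dl b a * (u e * dl e b * u c)) = u a * u c"
    by (simp only: ss1) simp
  also have "(\<Sum>b\<in>UNIV. \<Sum>e\<in>UNIV. dl b a * (u e * dl e c * u b)) = u a * u c"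
    by (simp only: ss1) simp
  also have "(\<Sum>b\<in>UNIV. \<Sum>e\<in>UNIV. dl b a * (u e * G b c * U e)) = G a c * uu"
    by (simp only: ss1) (simp add: uu_def sum_distrib_left algebra_simps)
  also have "(\<Sum>b\<in>UNIV. \<Sum>e\<in>UNIV. dl (b::'n) e * (u a * dl e b * u c)) = nn * u a * u c"
  proof -
    have "(\<Sum>b\<in>UNIV. \<Sum>e\<in>UNIV. dl (b::'n) e * (u a * dl e b * u c)) = (\<Sum>b\<in>UNIV. dl (b::'n) b * (u a * u c))"
      by (simp only: sum_dl_l1) (simp add: mult_ac)
    also have "\<dots> = nn * u a * u c" by (simp add: sum_distrib_right[symmetric] sum_dl_diag nn_def)
    finally show ?thesis .
  qed
  also have "(\<Sum>b\<in>UNIV. \<Sum>e\<in>UNIV. dl b e * (u a * dl e c * u b)) = u a * u c"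
    by simp
  also have "(\<Sum>b\<in>UNIV. \<Sum>e\<in>UNIV. dl b e * (u a * G b c * U e)) = u a * u c"
    using GU2[of c] by (simp add: sum_distrib_left[symmetric] mult.assoc)
  also have "(\<Sum>b\<in>UNIV. \<Sum>e\<in>UNIV. G a e * U b * dl e b * u c) = u a * u c"
    by (simp only: sum_dl_m1) (simp add: sum_distrib_right[symmetric] GU)
  also have "(\<Sum>b\<in>UNIV. \<Sum>e\<in>UNIV. G a e * U b * dl e c * u b) = G a c * uu"
    by (simp only: sum_dl_m1) (simp add: uu_def sum_distrib_left algebra_simps)
  also have "(\<Sum>b\<in>UNIV. \<Sum>e\<in>UNIV. G a e * U b * (G b c * U e)) = u a * u c"
  proof -
    have "(\<Sum>b\<in>UNIV. \<Sum>e\<in>UNIV. G a e * U b * (G b c * U e)) = (\<Sum>b\<in>UNIV. U b * G b c) * (\<Sum>e\<in>UNIV. G a e * U e)"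
      by (simp add: sum_product algebra_simps)
    thus ?thesis using GU GU' by simp
  qed
  finally show ?thesis by (simp add: algebra_simps)
qed

lemma dGiu: "(\<Sum>e\<in>UNIV. dGi b d e * u e) =
   - (\<Sum>m\<in>UNIV. \<Gamma> d b m * U m) - (\<Sum>m\<in>UNIV. Gi d m * (\<Sum>e\<in>UNIV. \<Gamma> e b m * u e))"
proof -
  have "(\<Sum>e\<in>UNIV. dGi b d e * u e) =
     - (\<Sum>e\<in>UNIV. \<Sum>m\<in>UNIV. \<Gamma> d b m * Gi m e * u e) - (\<Sum>e\<in>UNIV. \<Sum>m\<in>UNIV. \<Gamma> e b m * Gi d m * u e)"
    unfolding dGi_def by (simp add: sum_distrib_right sum_distrib_left sum.distrib sum_subtractf sum_negf algebra_simps)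
  also have "(\<Sum>e\<in>UNIV. \<Sum>m\<in>UNIV. \<Gamma> d b m * Gi m e * u e) = (\<Sum>m\<in>UNIV. \<Gamma> d b m * U m)"
    by (subst sum.swap) (simp add: U_def sum_distrib_left mult.assoc)
  also have "(\<Sum>e\<in>UNIV. \<Sum>m\<in>UNIV. \<Gamma> e b m * Gi d m * u e) = (\<Sum>m\<in>UNIV. Gi d m * (\<Sum>e\<in>UNIV. \<Gamma> e b m * u e))"
    by (subst sum.swap) (simp add: sum_distrib_left algebra_simps)
  finally show ?thesis .
qed

lemma GGiX: "(\<Sum>b\<in>UNIV. G b c * (\<Sum>m\<in>UNIV. Gi b m * f m)) = f c"
proof -
  have "(\<Sum>b\<in>UNIV. G b c * (\<Sum>m\<in>UNIV. Gi b m * f m)) = (\<Sum>m\<in>UNIV. (\<Sum>b\<in>UNIV. G c b * Gi b m) * f m)"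
    unfolding sum_distrib_left sum_distrib_right by (subst sum.swap) (simp add: Gsym[of _ c] mult.assoc)
  thus ?thesis by (simp add: GGi)
qed

lemma p2: "(\<Sum>b\<in>UNIV. dK a b b c) = nn * H a c"
proof -
  have "(\<Sum>b\<in>UNIV. dK a b b c) = (\<Sum>b\<in>UNIV. dl (b::'n) b * H a c) + (\<Sum>b\<in>UNIV. dl b c * H a b)
     - (\<Sum>b\<in>UNIV. dG a b c * U b) - (\<Sum>b\<in>UNIV. G b c * (\<Sum>e\<in>UNIV. dGi a b e * u e))
     - (\<Sum>b\<in>UNIV. G b c * (\<Sum>e\<in>UNIV. Gi b e * H a e))"
    unfolding dK_def by (simp add: sum.distrib sum_subtractf algebra_simps)
  also have "(\<Sum>b\<in>UNIV. dl (b::'n) b * H a c) = nn * H a c"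
    by (simp add: sum_distrib_right[symmetric] sum_dl_diag nn_def)
  also have "(\<Sum>b\<in>UNIV. G b c * (\<Sum>e\<in>UNIV. Gi b e * H a e)) = H a c" by (rule GGiX)
  also have "(\<Sum>b\<in>UNIV. dG a b c * U b) = (\<Sum>b\<in>UNIV. \<Sum>e\<in>UNIV. \<Gamma> e a b * G e c * U b) + (\<Sum>e\<in>UNIV. \<Gamma> e a c * u e)"
  proof -
    have "(\<Sum>b\<in>UNIV. dG a b c * U b) = (\<Sum>b\<in>UNIV. \<Sum>e\<in>UNIV. \<Gamma> e a b * G e c * U b) + (\<Sum>b\<in>UNIV. \<Sum>e\<in>UNIV. \<Gamma> e a c * G b e * U b)"
      unfolding dG_def by (simp add: sum.distrib sum_distrib_right sum_distrib_left algebra_simps)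
    also have "(\<Sum>b\<in>UNIV. \<Sum>e\<in>UNIV. \<Gamma> e a c * G b e * U b) = (\<Sum>e\<in>UNIV. \<Gamma> e a c * (\<Sum>b\<in>UNIV. G b e * U b))"
      by (subst sum.swap) (simp add: sum_distrib_left algebra_simps)
    finally show ?thesis by (simp add: GU2)
  qed
  also have "(\<Sum>b\<in>UNIV. G b c * (\<Sum>e\<in>UNIV. dGi a b e * u e)) =
      - (\<Sum>b\<in>UNIV. \<Sum>e\<in>UNIV. \<Gamma> e a b * G e c * U b) - (\<Sum>e\<in>UNIV. \<Gamma> e a c * u e)"
  proof -
    have "(\<Sum>b\<in>UNIV. G b c * (\<Sum>e\<in>UNIV. dGi a b e * u e)) =
       - (\<Sum>b\<in>UNIV. G b c * (\<Sum>m\<in>UNIV. \<Gamma> b a m * U m))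
       - (\<Sum>b\<in>UNIV. G b c * (\<Sum>m\<in>UNIV. Gi b m * (\<Sum>e\<in>UNIV. \<Gamma> e a m * u e)))"
      by (simp only: dGiu) (simp add: algebra_simps sum_subtractf sum.distrib sum_negf)
    also have "(\<Sum>b\<in>UNIV. G b c * (\<Sum>m\<in>UNIV. Gi b m * (\<Sum>e\<in>UNIV. \<Gamma> e a m * u e)))
       = (\<Sum>e\<in>UNIV. \<Gamma> e a c * u e)" by (rule GGiX)
    also have "(\<Sum>b\<in>UNIV. G b c * (\<Sum>m\<in>UNIV. \<Gamma> b a m * U m)) = (\<Sum>b\<in>UNIV. \<Sum>e\<in>UNIV. \<Gamma> e a b * G e c * U b)"
      by (subst sum.swap) (simp add: sum_distrib_left algebra_simps)
    finally show ?thesis by simp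
  qed
  finally show ?thesis by (simp add: Hsym)
qed

lemma p1: "(\<Sum>b\<in>UNIV. dK b b a c) = 2 * H a c
    - (\<Sum>b\<in>UNIV. \<Sum>e\<in>UNIV. \<Gamma> e b a * G e c * U b) - (\<Sum>b\<in>UNIV. \<Sum>e\<in>UNIV. \<Gamma> e b c * G a e * U b)
    + G a c * (\<Sum>m\<in>UNIV. T\<Gamma> m * U m) - G a c * trH"
proof -
  have "(\<Sum>b\<in>UNIV. dK b b a c) = (\<Sum>b\<in>UNIV. dl b a * H b c) + (\<Sum>b\<in>UNIV. dl b c * H b a)
     - (\<Sum>b\<in>UNIV. dG b a c * U b) - G a c * ((\<Sum>b\<in>UNIV. \<Sum>e\<in>UNIV. dGi b b e * u e)
     + (\<Sum>b\<in>UNIV. \<Sum>e\<in>UNIV. Gi b e * H b e))"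
    unfolding dK_def by (simp add: sum.distrib sum_subtractf algebra_simps sum_distrib_left)
  also have "(\<Sum>b\<in>UNIV. dG b a c * U b) = (\<Sum>b\<in>UNIV. \<Sum>e\<in>UNIV. \<Gamma> e b a * G e c * U b)
      + (\<Sum>b\<in>UNIV. \<Sum>e\<in>UNIV. \<Gamma> e b c * G a e * U b)"
    unfolding dG_def by (simp add: sum.distrib sum_distrib_right sum_distrib_left algebra_simps)
  also have "(\<Sum>b\<in>UNIV. \<Sum>e\<in>UNIV. dGi b b e * u e) = - (\<Sum>m\<in>UNIV. T\<Gamma> m * U m)
      - (\<Sum>b\<in>UNIV. \<Sum>m\<in>UNIV. Gi b m * (\<Sum>e\<in>UNIV. \<Gamma> e b m * u e))"
  proof -
    have "(\<Sum>b\<in>UNIV. \<Sum>e\<in>UNIV. dGi b b e * u e) = - (\<Sum>b\<in>UNIV. \<Sum>m\<in>UNIV. \<Gamma> b b m * U m)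
      - (\<Sum>b\<in>UNIV. \<Sum>m\<in>UNIV. Gi b m * (\<Sum>e\<in>UNIV. \<Gamma> e b m * u e))"
      by (simp add: dGiu sum_subtractf sum_negf)
    also have "(\<Sum>b\<in>UNIV. \<Sum>m\<in>UNIV. \<Gamma> b b m * U m) = (\<Sum>m\<in>UNIV. T\<Gamma> m * U m)"
      unfolding T\<Gamma>_def sum_distrib_right by (rule sum.swap)
    finally show ?thesis .
  qed
  also have "(\<Sum>b\<in>UNIV. \<Sum>e\<in>UNIV. Gi b e * H b e) = trH
      + (\<Sum>b\<in>UNIV. \<Sum>m\<in>UNIV. Gi b m * (\<Sum>e\<in>UNIV. \<Gamma> e b m * u e))"
    unfolding trH_def Hs_def by (simp add: algebra_simps sum_subtractf sum.distrib)
  finally show ?thesis by (simp add: Hsym[of c a] algebra_simps)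
qed

lemma stepA: "(\<Sum>b\<in>UNIV. dK b b a c - dK a b b c + (\<Sum>e\<in>UNIV. \<Gamma> b b e * K e a c + K b b e * \<Gamma> e a c
     + K b b e * K e a c - \<Gamma> b a e * K e b c - K b a e * \<Gamma> e b c - K b a e * K e b c))
   = - (nn - 2) * Hs a c + (nn - 2) * u a * u c - G a c * (trH + (nn - 2) * uu)"
proof -
  have "(\<Sum>b\<in>UNIV. dK b b a c - dK a b b c + (\<Sum>e\<in>UNIV. \<Gamma> b b e * K e a c + K b b e * \<Gamma> e a c
     + K b b e * K e a c - \<Gamma> b a e * K e b c - K b a e * \<Gamma> e b c - K b a e * K e b c))
   = (\<Sum>b\<in>UNIV. dK b b a c) - (\<Sum>b\<in>UNIV. dK a b b c) + (\<Sum>b\<in>UNIV. \<Sum>e\<in>UNIV. \<Gamma> b b e * K e a c)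
     + (\<Sum>b\<in>UNIV. \<Sum>e\<in>UNIV. K b b e * \<Gamma> e a c) + (\<Sum>b\<in>UNIV. \<Sum>e\<in>UNIV. K b b e * K e a c)
     - (\<Sum>b\<in>UNIV. \<Sum>e\<in>UNIV. \<Gamma> b a e * K e b c) - (\<Sum>b\<in>UNIV. \<Sum>e\<in>UNIV. K b a e * \<Gamma> e b c)
     - (\<Sum>b\<in>UNIV. \<Sum>e\<in>UNIV. K b a e * K e b c)"
    by (simp add: sum.distrib sum_subtractf)
  moreover have q1: "(\<Sum>b\<in>UNIV. \<Sum>e\<in>UNIV. \<Gamma> b a e * G b c * U e) = (\<Sum>b\<in>UNIV. \<Sum>e\<in>UNIV. \<Gamma> e b a * G e c * U b)"
    by (subst sum.swap) (simp add: \<Gamma>sym[of _ a])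
  moreover have q2: "(\<Sum>b\<in>UNIV. \<Sum>e\<in>UNIV. G a e * U b * \<Gamma> e b c) = (\<Sum>b\<in>UNIV. \<Sum>e\<in>UNIV. \<Gamma> e b c * G a e * U b)"
    by (simp add: mult_ac)
  ultimately show ?thesis unfolding p1 p2 p3 p4 p5 p6 p7 p8 Hs_def by (simp add: algebra_simps)
qed

lemma ricci_tilde: "(\<Sum>b\<in>UNIV. (dg b b a c + dK b b a c) - (dg a b b c + dK a b b c)
    + (\<Sum>e\<in>UNIV. (\<Gamma> b b e + K b b e) * (\<Gamma> e a c + K e a c) - (\<Gamma> b a e + K b a e) * (\<Gamma> e b c + K e b c)))
  = (\<Sum>b\<in>UNIV. dg b b a c - dg a b b c + (\<Sum>e\<in>UNIV. \<Gamma> b b e * \<Gamma> e a c - \<Gamma> b a e * \<Gamma> e b c))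
    - (nn - 2) * Hs a c + (nn - 2) * u a * u c - G a c * (trH + (nn - 2) * uu)"
proof -
  have "(\<Sum>b\<in>UNIV. (dg b b a c + dK b b a c) - (dg a b b c + dK a b b c)
    + (\<Sum>e\<in>UNIV. (\<Gamma> b b e + K b b e) * (\<Gamma> e a c + K e a c) - (\<Gamma> b a e + K b a e) * (\<Gamma> e b c + K e b c)))
   = (\<Sum>b\<in>UNIV. dg b b a c - dg a b b c + (\<Sum>e\<in>UNIV. \<Gamma> b b e * \<Gamma> e a c - \<Gamma> b a e * \<Gamma> e b c))
     + (\<Sum>b\<in>UNIV. dK b b a c - dK a b b c + (\<Sum>e\<in>UNIV. \<Gamma> b b e * K e a c + K b b e * \<Gamma> e a c
     + K b b e * K e a c - \<Gamma> b a e * K e b c - K b a e * \<Gamma> e b c - K b a e * K e b c))"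
    by (simp add: sum.distrib[symmetric] algebra_simps)
  thus ?thesis using stepA by (simp add: algebra_simps)
qed

lemma GiG_tr: "(\<Sum>a\<in>UNIV. \<Sum>c\<in>UNIV. Gi a c * G a c) = nn"
proof -
  have "(\<Sum>a\<in>UNIV. \<Sum>c\<in>UNIV. Gi a c * G a c) = (\<Sum>a\<in>UNIV. dl (a::'n) a)"
    using GiG by (simp add: Gsym[of _ "_::'n"])
  thus ?thesis by (simp add: sum_dl_diag nn_def)
qed

lemma Giuu: "(\<Sum>a\<in>UNIV. \<Sum>c\<in>UNIV. Gi a c * (u a * u c)) = uu"
  unfolding uu_def U_def by (simp add: sum_distrib_left algebra_simps)

lemma schouten_alg:
  assumes n3: "nn \<ge> 3"
    and R: "\<And>a c. R a c = lam * W * G a c + (nn - 2) * Hs a c - (nn - 2) * (u a * u c) + G a c * (trH + (nn - 2) * uu)"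
  shows "R a b / (nn - 2) - G a b * (\<Sum>a\<in>UNIV. \<Sum>c\<in>UNIV. Gi a c * R a c) / (2 * (nn - 1) * (nn - 2))
     = Hs a b - u a * u b + G a b * (uu / 2 + lam * W / (2 * (nn - 1)))"
proof -
  have sc: "(\<Sum>a\<in>UNIV. \<Sum>c\<in>UNIV. Gi a c * R a c) = lam * W * nn + (nn - 2) * trH - (nn - 2) * uu + nn * (trH + (nn - 2) * uu)"
  proof -
    have "(\<Sum>a\<in>UNIV. \<Sum>c\<in>UNIV. Gi a c * R a c) =
       lam * W * (\<Sum>a\<in>UNIV. \<Sum>c\<in>UNIV. Gi a c * G a c) + (nn - 2) * (\<Sum>a\<in>UNIV. \<Sum>c\<in>UNIV. Gi a c * Hs a c)
       - (nn - 2) * (\<Sum>a\<in>UNIV. \<Sum>c\<in>UNIV. Gi a c * (u a * u c))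
       + (\<Sum>a\<in>UNIV. \<Sum>c\<in>UNIV. Gi a c * G a c) * (trH + (nn - 2) * uu)"
      unfolding R by (simp add: sum.distrib sum_subtractf sum_distrib_left sum_distrib_right algebra_simps)
    thus ?thesis unfolding GiG_tr Giuu trH_def by simp
  qed
  have a: "nn - 2 \<noteq> 0" "nn - 1 \<noteq> 0" using n3 by auto
  have Rab: "R a b = lam * W * G a b + (nn - 2) * Hs a b - (nn - 2) * (u a * u b) + G a b * (trH + (nn - 2) * uu)"
    by (rule R)
  define X where "X = R a b"
  define Y where "Y = G a b * (\<Sum>a\<in>UNIV. \<Sum>c\<in>UNIV. Gi a c * R a c)"
  define q where "q = lam * W / (2 * (nn - 1))"
  have lw: "lam * W = 2 * (nn - 1) * q" unfolding q_def using a by simp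
  define Z where "Z = Hs a b - u a * u b + G a b * (uu / 2 + q)"
  have d: "2 * (nn - 1) * (nn - 2) \<noteq> 0" using a by simp
  have eq1: "X / (nn - 2) - Y / (2 * (nn - 1) * (nn - 2)) = (X * (2 * (nn - 1)) - Y) / (2 * (nn - 1) * (nn - 2))"
    using a by (simp add: diff_divide_distrib)
  have num: "X * (2 * (nn - 1)) - Y = Z * (2 * (nn - 1) * (nn - 2))"
    unfolding X_def Y_def Z_def sc Rab lw by (simp add: algebra_simps)
  have "X / (nn - 2) - Y / (2 * (nn - 1) * (nn - 2)) = Z"
    unfolding eq1 num using d by simp
  thus ?thesis unfolding X_def Y_def Z_def q_def by simp
qed

end

locale pt2 = pt G Gi \<Gamma> u H
  for G Gi :: "'n::finite \<Rightarrow> 'n \<Rightarrow> real" and \<Gamma> :: "'n \<Rightarrow> 'n \<Rightarrow> 'n \<Rightarrow> real"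
    and u :: "'n \<Rightarrow> real" and H :: "'n \<Rightarrow> 'n \<Rightarrow> real" +
  fixes d\<Gamma> :: "'n \<Rightarrow> 'n \<Rightarrow> 'n \<Rightarrow> 'n \<Rightarrow> real" and dH :: "'n \<Rightarrow> 'n \<Rightarrow> 'n \<Rightarrow> real"
    and W cst :: real
  assumes dHsym: "dH r s a = dH s r a"
begin

definition "P = uu / 2 + cst * W"
definition "L s a = Hs s a - u s * u a + G s a * P"
definition "duu r = (\<Sum>e\<in>UNIV. H r e * U e + u e * (\<Sum>l\<in>UNIV. dGi r e l * u l + Gi e l * H r l))"
definition "dP r = duu r / 2 + cst * (2 * W * u r)"
definition "dL r s a = dH r s a - (\<Sum>e\<in>UNIV. d\<Gamma> r e s a * u e + \<Gamma> e s a * H r e)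
   - (H r s * u a + u s * H r a) + dG r s a * P + G s a * dP r"
definition "nL r s a = dL r s a - (\<Sum>k\<in>UNIV. \<Gamma> k r s * L k a + \<Gamma> k r a * L s k)"
definition "Lm s d = (\<Sum>e\<in>UNIV. L s e * Gi e d)"
definition "rm r s a d = d\<Gamma> s d r a - d\<Gamma> r d s a + (\<Sum>e\<in>UNIV. \<Gamma> d s e * \<Gamma> e r a - \<Gamma> d r e * \<Gamma> e s a)"
definition "wy r s a d = rm r s a d - (Lm s d * G r a - Lm r d * G s a) - (dl s d * L r a - dl r d * L s a)"
definition "LU r = (\<Sum>e\<in>UNIV. L r e * U e)"

lemma c1: "duu r = 2 * (\<Sum>e\<in>UNIV. Hs r e * U e)"
proof -
  have "duu r = (\<Sum>e\<in>UNIV. H r e * U e) + (\<Sum>e\<in>UNIV. u e * (\<Sum>l\<in>UNIV. dGi r e l * u l))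
     + (\<Sum>e\<in>UNIV. u e * (\<Sum>l\<in>UNIV. Gi e l * H r l))"
    unfolding duu_def by (simp add: sum.distrib algebra_simps)
  also have "(\<Sum>e\<in>UNIV. u e * (\<Sum>l\<in>UNIV. Gi e l * H r l)) = (\<Sum>e\<in>UNIV. H r e * U e)"
    unfolding U_def sum_distrib_left by (subst sum.swap) (simp add: Gisym[of _ "_::'n"] mult_ac)
  also have "(\<Sum>e\<in>UNIV. u e * (\<Sum>l\<in>UNIV. dGi r e l * u l)) = - 2 * (\<Sum>e\<in>UNIV. (\<Sum>f\<in>UNIV. \<Gamma> f r e * u f) * U e)"
  proof -
    have "(\<Sum>e\<in>UNIV. u e * (\<Sum>l\<in>UNIV. dGi r e l * u l)) =
       - (\<Sum>e\<in>UNIV. u e * (\<Sum>m\<in>UNIV. \<Gamma> e r m * U m)) - (\<Sum>e\<in>UNIV. u e * (\<Sum>m\<in>UNIV. Gi e m * (\<Sum>f\<in>UNIV. \<Gamma> f r m * u f)))"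
      by (simp only: dGiu) (simp add: algebra_simps sum_subtractf sum.distrib sum_negf)
    also have "(\<Sum>e\<in>UNIV. u e * (\<Sum>m\<in>UNIV. Gi e m * (\<Sum>f\<in>UNIV. \<Gamma> f r m * u f))) = (\<Sum>m\<in>UNIV. (\<Sum>f\<in>UNIV. \<Gamma> f r m * u f) * U m)"
      unfolding U_def sum_distrib_left sum_distrib_right by (subst sum.swap) (simp add: Gisym[of _ "_::'n"] mult_ac)
    also have "(\<Sum>e\<in>UNIV. u e * (\<Sum>m\<in>UNIV. \<Gamma> e r m * U m)) = (\<Sum>m\<in>UNIV. (\<Sum>f\<in>UNIV. \<Gamma> f r m * u f) * U m)"
      unfolding sum_distrib_left sum_distrib_right by (subst sum.swap) (simp add: mult_ac)
    finally show ?thesis by simp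
  qed
  finally show ?thesis unfolding Hs_def by (simp add: sum_subtractf algebra_simps)
qed

lemma c2: "LU r = (\<Sum>e\<in>UNIV. Hs r e * U e) - u r * uu + u r * P"
proof -
  have "LU r = (\<Sum>e\<in>UNIV. Hs r e * U e) - u r * (\<Sum>e\<in>UNIV. u e * U e) + P * (\<Sum>e\<in>UNIV. G r e * U e)"
    unfolding LU_def L_def by (simp add: sum.distrib sum_subtractf sum_distrib_left algebra_simps)
  thus ?thesis by (simp add: GU uu_def)
qed

lemma dP_eq: "dP r = LU r + u r * P"
  unfolding dP_def c1 c2 P_def by (simp add: algebra_simps)

lemma c3: "(\<Sum>d\<in>UNIV. Lm s d * u d) = LU s"
  unfolding Lm_def LU_def U_def
  by (simp add: sum_distrib_left sum_distrib_right algebra_simps) (rule sum.swap)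

definition "Asym r s a = dH r s a - H r s * u a + P * (\<Sum>e\<in>UNIV. \<Gamma> e r s * G e a) - (\<Sum>k\<in>UNIV. \<Gamma> k r s * L k a)"
definition "Bsym r s a = - (\<Sum>e\<in>UNIV. \<Gamma> e s a * H r e) - (\<Sum>k\<in>UNIV. \<Gamma> k r a * H s k)"
definition "Cp r s a = - (\<Sum>e\<in>UNIV. d\<Gamma> r e s a * u e) + (\<Sum>k\<in>UNIV. \<Sum>e\<in>UNIV. \<Gamma> k r a * \<Gamma> e s k * u e)
   - u s * Hs r a + G s a * dP r"

lemma nL_split: "nL r s a = Asym r s a + Bsym r s a + Cp r s a"
  unfolding nL_def dL_def Asym_def Bsym_def Cp_def dG_def L_def Hs_def
  by (simp add: sum.distrib sum_subtractf sum_distrib_left sum_distrib_right algebra_simps)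

lemma Asym_sym: "Asym r s a = Asym s r a"
  unfolding Asym_def by (simp add: dHsym[of r s] Hsym[of r s] \<Gamma>sym[of _ r s])

lemma Bsym_sym: "Bsym r s a = Bsym s r a"
  unfolding Bsym_def by simp

lemma c4: "nL r s a - nL s r a = (\<Sum>d\<in>UNIV. rm r s a d * u d) - u s * Hs r a + u r * Hs s a
    + G s a * dP r - G r a * dP s"
proof -
  have e1: "(\<Sum>k\<in>UNIV. \<Sum>e\<in>UNIV. \<Gamma> k r a * \<Gamma> e s k * u e) = (\<Sum>d\<in>UNIV. \<Sum>e\<in>UNIV. \<Gamma> d s e * \<Gamma> e r a * u d)"
    by (subst sum.swap) (simp add: mult_ac)
  have e2: "(\<Sum>k\<in>UNIV. \<Sum>e\<in>UNIV. \<Gamma> k s a * \<Gamma> e r k * u e) = (\<Sum>d\<in>UNIV. \<Sum>e\<in>UNIV. \<Gamma> d r e * \<Gamma> e s a * u d)"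
    by (subst sum.swap) (simp add: mult_ac)
  have "nL r s a - nL s r a = Cp r s a - Cp s r a"
    unfolding nL_split using Asym_sym Bsym_sym by simp
  also have "\<dots> = (\<Sum>d\<in>UNIV. rm r s a d * u d) - u s * Hs r a + u r * Hs s a
    + G s a * dP r - G r a * dP s"
    unfolding Cp_def rm_def e1 e2
    by (simp add: sum.distrib sum_subtractf sum_distrib_left sum_distrib_right algebra_simps)
  finally show ?thesis .
qed

lemma stepC: "(nL r s a - nL s r a) / 2 = (\<Sum>d\<in>UNIV. wy r s a d * (u d / 2))"
proof -
  have "(\<Sum>d\<in>UNIV. wy r s a d * u d) = (\<Sum>d\<in>UNIV. rm r s a d * u d)
     - ((\<Sum>d\<in>UNIV. Lm s d * u d) * G r a - (\<Sum>d\<in>UNIV. Lm r d * u d) * G s a)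
     - ((\<Sum>d\<in>UNIV. dl s d * (L r a * u d)) - (\<Sum>d\<in>UNIV. dl r d * (L s a * u d)))"
    unfolding wy_def by (simp add: sum.distrib sum_subtractf sum_distrib_left sum_distrib_right algebra_simps)
  also have "\<dots> = (\<Sum>d\<in>UNIV. rm r s a d * u d)
     - ((\<Sum>d\<in>UNIV. Lm s d * u d) * G r a - (\<Sum>d\<in>UNIV. Lm r d * u d) * G s a)
     - (L r a * u s - L s a * u r)" by (simp only: sum_dl_l1)
  also have "\<dots> = nL r s a - nL s r a"
    unfolding c3 c4 dP_eq L_def by (simp add: algebra_simps)
  finally have "(\<Sum>d\<in>UNIV. wy r s a d * u d) = nL r s a - nL s r a" .
  hence "(nL r s a - nL s r a) / 2 = (\<Sum>d\<in>UNIV. wy r s a d * u d) / 2" by simp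
  thus ?thesis by (simp add: sum_divide_distrib)
qed

end


lemma sum_pair: "(\<Sum>k\<in>(UNIV::('a::finite \<times> 'b::finite) set). f k) = (\<Sum>m\<in>UNIV. \<Sum>n\<in>UNIV. f (m, n))"
  by (simp add: sum.cartesian_product)

lemma swap22: "(\<Sum>u\<in>A. \<Sum>v\<in>B. \<Sum>m\<in>C. \<Sum>n\<in>D. f u v m n) = (\<Sum>m\<in>C. \<Sum>n\<in>D. \<Sum>u\<in>A. \<Sum>v\<in>B. f u v m n)"
proof -
  have "(\<Sum>u\<in>A. \<Sum>v\<in>B. \<Sum>m\<in>C. \<Sum>n\<in>D. f u v m n) = (\<Sum>u\<in>A. \<Sum>m\<in>C. \<Sum>v\<in>B. \<Sum>n\<in>D. f u v m n)"
    by (rule sum.cong[OF refl], rule sum.swap)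
  also have "\<dots> = (\<Sum>m\<in>C. \<Sum>u\<in>A. \<Sum>v\<in>B. \<Sum>n\<in>D. f u v m n)" by (rule sum.swap)
  also have "\<dots> = (\<Sum>m\<in>C. \<Sum>u\<in>A. \<Sum>n\<in>D. \<Sum>v\<in>B. f u v m n)"
    by (rule sum.cong[OF refl], rule sum.cong[OF refl], rule sum.swap)
  also have "\<dots> = (\<Sum>m\<in>C. \<Sum>n\<in>D. \<Sum>u\<in>A. \<Sum>v\<in>B. f u v m n)"
    by (rule sum.cong[OF refl], rule sum.swap)
  finally show ?thesis .
qed

context met begin

definition "Lg x = (\<chi> i k. gg x (fst i) (fst k) * gg x (snd i) (snd k))"
definition "Rg x = (\<chi> k j. gi x (fst k) (fst j) * gi x (snd k) (snd j))"

lemma LR: "x \<in> U \<Longrightarrow> Lg x ** Rg x = mat 1"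
proof -
  assume x: "x \<in> U"
  have "(Lg x ** Rg x) $ i $ j = mat 1 $ i $ j" for i j
  proof -
    obtain i1 i2 j1 j2 where ij: "i = (i1, i2)" "j = (j1, j2)" by (cases i, cases j) auto
    have "(Lg x ** Rg x) $ i $ j = (\<Sum>m\<in>UNIV. \<Sum>n\<in>UNIV. (gg x i1 m * gi x m j1) * (gg x i2 n * gi x n j2))"
      unfolding matrix_matrix_mult_def Lg_def Rg_def ij by (simp add: sum_pair mult_ac)
    also have "\<dots> = (\<Sum>m\<in>UNIV. gg x i1 m * gi x m j1) * (\<Sum>n\<in>UNIV. gg x i2 n * gi x n j2)"
      by (simp add: sum_product)
    also have "\<dots> = dl i1 j1 * dl i2 j2" using ginv_r[OF x] by simp
    also have "\<dots> = mat 1 $ i $ j" unfolding ij mat_def dl_def by auto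
    finally show ?thesis .
  qed
  thus ?thesis by (simp add: vec_eq_iff)
qed

lemma RL: "x \<in> U \<Longrightarrow> Rg x ** Lg x = mat 1"
proof -
  assume x: "x \<in> U"
  have "(Rg x ** Lg x) $ i $ j = mat 1 $ i $ j" for i j
  proof -
    obtain i1 i2 j1 j2 where ij: "i = (i1, i2)" "j = (j1, j2)" by (cases i, cases j) auto
    have "(Rg x ** Lg x) $ i $ j = (\<Sum>m\<in>UNIV. \<Sum>n\<in>UNIV. (gi x i1 m * gg x m j1) * (gi x i2 n * gg x n j2))"
      unfolding matrix_matrix_mult_def Lg_def Rg_def ij by (simp add: sum_pair mult_ac)
    also have "\<dots> = (\<Sum>m\<in>UNIV. gi x i1 m * gg x m j1) * (\<Sum>n\<in>UNIV. gi x i2 n * gg x n j2)"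
      by (simp add: sum_product)
    also have "\<dots> = dl i1 j1 * dl i2 j2" using ginv_l[OF x] by simp
    also have "\<dots> = mat 1 $ i $ j" unfolding ij mat_def dl_def by auto
    finally show ?thesis .
  qed
  thus ?thesis by (simp add: vec_eq_iff)
qed

lemma E1: "weyl_dduu g x b e q p = (Lg x ** weyl_endo g x ** Rg x) $ (b, e) $ (q, p)"
proof -
  have "(Lg x ** weyl_endo g x ** Rg x) $ (b, e) $ (q, p) =
     (\<Sum>u\<in>UNIV. \<Sum>v\<in>UNIV. \<Sum>m\<in>UNIV. \<Sum>n\<in>UNIV. g x $ b $ m * g x $ e $ n * weyl_uudd g x m n u v * ginv g x $ u $ q * ginv g x $ v $ p)"
    unfolding matrix_matrix_mult_def Lg_def Rg_def weyl_endo_def gg_def gi_def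
    by (simp add: sum_pair sum_distrib_right sum_distrib_left mult_ac)
  also have "\<dots> = weyl_dduu g x b e q p"
    unfolding weyl_dduu_def by (rule swap22)
  finally show ?thesis ..
qed

lemma E2: "pinv_dduu g x q p r s = (Lg x ** MP_inverse (weyl_endo g x) ** Rg x) $ (q, p) $ (r, s)"
proof -
  have "(Lg x ** MP_inverse (weyl_endo g x) ** Rg x) $ (q, p) $ (r, s) =
     (\<Sum>u\<in>UNIV. \<Sum>v\<in>UNIV. \<Sum>m\<in>UNIV. \<Sum>n\<in>UNIV. g x $ q $ m * g x $ p $ n * MP_inverse (weyl_endo g x) $ (m, n) $ (u, v) * ginv g x $ u $ r * ginv g x $ v $ s)"
    unfolding matrix_matrix_mult_def Lg_def Rg_def gg_def gi_def
    by (simp add: sum_pair sum_distrib_right sum_distrib_left mult_ac)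
  also have "\<dots> = pinv_dduu g x q p r s"
    unfolding pinv_dduu_def by (rule swap22)
  finally show ?thesis ..
qed

lemma GW: "x \<in> U \<Longrightarrow> (\<Sum>l\<in>UNIV. gg x d' l * (\<Sum>d\<in>UNIV. gi x l d * w d)) = w d'"
proof -
  assume x: "x \<in> U"
  have "(\<Sum>l\<in>UNIV. gg x d' l * (\<Sum>d\<in>UNIV. gi x l d * w d)) = (\<Sum>d\<in>UNIV. (\<Sum>l\<in>UNIV. gg x d' l * gi x l d) * w d)"
    unfolding sum_distrib_left sum_distrib_right by (subst sum.swap) (simp add: mult_ac)
  thus ?thesis using ginv_r[OF x] by simp
qed

lemma E3:
  assumes x: "x \<in> U" and X: "\<And>r s. X r s = (\<Sum>d\<in>UNIV. weyl g x r s a d * w d)"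
  shows "Rg x *v (\<chi> rs. X (fst rs) (snd rs)) =
    weyl_endo g x *v (\<chi> kl. dl (fst kl) a * (\<Sum>d\<in>UNIV. gi x (snd kl) d * w d))"
proof -
  define V where "V l = (\<Sum>d\<in>UNIV. gi x l d * w d)" for l
  have "(Rg x *v (\<chi> rs. X (fst rs) (snd rs))) $ (u, v) = (weyl_endo g x *v (\<chi> kl. dl (fst kl) a * V (snd kl))) $ (u, v)" for u v
  proof -
    have "(weyl_endo g x *v (\<chi> kl. dl (fst kl) a * V (snd kl))) $ (u, v)
       = (\<Sum>k\<in>UNIV. \<Sum>l\<in>UNIV. dl k a * (weyl_uudd g x u v k l * V l))"
      unfolding matrix_vector_mult_def weyl_endo_def by (simp add: sum_pair mult_ac)
    also have "\<dots> = (\<Sum>l\<in>UNIV. weyl_uudd g x u v a l * V l)"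
      by (subst sum.swap) simp
    also have "\<dots> = (\<Sum>l\<in>UNIV. \<Sum>p\<in>UNIV. \<Sum>q\<in>UNIV. \<Sum>d\<in>UNIV.
          gi x u p * gi x v q * weyl g x p q a d * (gg x d l * V l))"
      unfolding weyl_uudd_def gi_def gg_def by (simp add: sum_distrib_right sum_distrib_left mult_ac)
    also have "\<dots> = (\<Sum>p\<in>UNIV. \<Sum>q\<in>UNIV. \<Sum>d\<in>UNIV. \<Sum>l\<in>UNIV.
          gi x u p * gi x v q * weyl g x p q a d * (gg x d l * V l))"
    proof -
      have "(\<Sum>l\<in>UNIV. \<Sum>p\<in>UNIV. \<Sum>q\<in>UNIV. \<Sum>d\<in>UNIV. F l p q d) = (\<Sum>p\<in>UNIV. \<Sum>q\<in>UNIV. \<Sum>d\<in>UNIV. \<Sum>l\<in>UNIV. F l p q d)"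
        for F :: "'n \<Rightarrow> 'n \<Rightarrow> 'n \<Rightarrow> 'n \<Rightarrow> real"
      proof -
        have "(\<Sum>l\<in>UNIV. \<Sum>p\<in>UNIV. \<Sum>q\<in>UNIV. \<Sum>d\<in>UNIV. F l p q d) = (\<Sum>p\<in>UNIV. \<Sum>l\<in>UNIV. \<Sum>q\<in>UNIV. \<Sum>d\<in>UNIV. F l p q d)"
          by (rule sum.swap)
        also have "\<dots> = (\<Sum>p\<in>UNIV. \<Sum>q\<in>UNIV. \<Sum>l\<in>UNIV. \<Sum>d\<in>UNIV. F l p q d)"
          by (rule sum.cong[OF refl], rule sum.swap)
        also have "\<dots> = (\<Sum>p\<in>UNIV. \<Sum>q\<in>UNIV. \<Sum>d\<in>UNIV. \<Sum>l\<in>UNIV. F l p q d)"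
          by (rule sum.cong[OF refl], rule sum.cong[OF refl], rule sum.swap)
        finally show ?thesis .
      qed
      thus ?thesis .
    qed
    also have "\<dots> = (\<Sum>p\<in>UNIV. \<Sum>q\<in>UNIV. gi x u p * gi x v q * (\<Sum>d\<in>UNIV. weyl g x p q a d * w d))"
      using GW[OF x] unfolding V_def
      by (simp add: sum_distrib_left[symmetric] mult.assoc)
    also have "\<dots> = (Rg x *v (\<chi> rs. X (fst rs) (snd rs))) $ (u, v)"
      unfolding matrix_vector_mult_def Rg_def X by (simp add: sum_pair)
    finally show ?thesis ..
  qed
  hence "Rg x *v (\<chi> rs. X (fst rs) (snd rs)) = weyl_endo g x *v (\<chi> kl. dl (fst kl) a * V (snd kl))"
    by (simp add: vec_eq_iff)
  thus ?thesis unfolding V_def .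
qed

lemma contraction:
  assumes x: "x \<in> U" and X: "\<And>r s. X r s = (\<Sum>d\<in>UNIV. weyl g x r s a d * w d)"
  shows "(\<Sum>q\<in>UNIV. \<Sum>p\<in>UNIV. \<Sum>r\<in>UNIV. \<Sum>s\<in>UNIV.
        weyl_dduu g x b e q p * pinv_dduu g x q p r s * X r s) = X b e"
proof -
  define A where "A = weyl_endo g x"
  define Pm where "Pm = MP_inverse A"
  define M1 where "M1 = Lg x ** A ** Rg x"
  define M2 where "M2 = Lg x ** Pm ** Rg x"
  define Xv where "Xv = (\<chi> rs. X (fst rs) (snd rs))"
  define Y where "Y = (\<chi> kl. dl (fst kl) a * (\<Sum>d\<in>UNIV. gi x (snd kl) d * w d))"
  have "(\<Sum>q\<in>UNIV. \<Sum>p\<in>UNIV. \<Sum>r\<in>UNIV. \<Sum>s\<in>UNIV.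
        weyl_dduu g x b e q p * pinv_dduu g x q p r s * X r s)
      = (\<Sum>q\<in>UNIV. \<Sum>p\<in>UNIV. \<Sum>r\<in>UNIV. \<Sum>s\<in>UNIV. M1 $ (b, e) $ (q, p) * M2 $ (q, p) $ (r, s) * Xv $ (r, s))"
    unfolding M1_def M2_def A_def Pm_def Xv_def E1 E2 by simp
  also have "\<dots> = (\<Sum>r\<in>UNIV. \<Sum>s\<in>UNIV. \<Sum>q\<in>UNIV. \<Sum>p\<in>UNIV. M1 $ (b, e) $ (q, p) * M2 $ (q, p) $ (r, s) * Xv $ (r, s))"
    by (rule swap22)
  also have "\<dots> = ((M1 ** M2) *v Xv) $ (b, e)"
    unfolding matrix_vector_mult_def matrix_matrix_mult_def
    by (simp add: sum_pair sum_distrib_right)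
  also have "M1 ** M2 = Lg x ** A ** Pm ** Rg x"
  proof -
    have "M1 ** M2 = (Lg x ** A) ** (Rg x ** Lg x) ** (Pm ** Rg x)"
      unfolding M1_def M2_def by (simp add: matrix_mul_assoc)
    also have "\<dots> = Lg x ** A ** Pm ** Rg x" using RL[OF x] by (simp add: matrix_mul_assoc)
    finally show ?thesis .
  qed
  also have "(Lg x ** A ** Pm ** Rg x) *v Xv = Lg x *v (A *v (Pm *v (Rg x *v Xv)))"
    by (simp add: matrix_vector_mul_assoc matrix_mul_assoc)
  also have "Rg x *v Xv = A *v Y" unfolding Xv_def A_def Y_def using E3[OF x X] .
  also have "A *v (Pm *v (A *v Y)) = (A ** Pm ** A) *v Y" by (simp add: matrix_vector_mul_assoc matrix_mul_assoc)
  also have "A ** Pm ** A = A" using MP_inverse[of A] unfolding Pm_def is_MP_inverse_def by blast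
  also have "A *v Y = Rg x *v Xv" unfolding Xv_def A_def Y_def using E3[OF x X] by simp
  also have "Lg x *v (Rg x *v Xv) = Xv" using LR[OF x] by (simp add: matrix_vector_mul_assoc)
  finally show ?thesis unfolding Xv_def by simp
qed

end


context met begin

abbreviation "Gm y \<equiv> christoffel g y"

lemma d_pdg: "y \<in> U \<Longrightarrow> (\<lambda>z. pd c (\<lambda>z. g z $ a $ b) z) differentiable (at y)"
  using d_dg unfolding dg_def by simp

lemma chr_eq: "christoffel g y c a b = (1/2) * (\<Sum>d\<in>UNIV. gi y c d * (dg a y d b + dg b y d a - dg d y a b))"
  unfolding christoffel_def gi_def dg_def by simp

lemma chr_sym: "y \<in> U \<Longrightarrow> christoffel g y c a b = christoffel g y c b a"
  unfolding chr_eq using dgsym[of y _ a b] by (simp add: algebra_simps)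

lemma d_chr: "y \<in> U \<Longrightarrow> (\<lambda>z. christoffel g z c a b) differentiable (at y)"
  unfolding christoffel_def
  by (intro differentiable_mult differentiable_sum differentiable_add differentiable_diff ballI
        differentiable_const d_gi d_pdg finite) auto

lemma chr_low: "y \<in> U \<Longrightarrow> (\<Sum>e\<in>UNIV. gg y d e * christoffel g y e a b) = (1/2) * (dg a y d b + dg b y d a - dg d y a b)"
proof -
  assume y: "y \<in> U"
  have "(\<Sum>e\<in>UNIV. gg y d e * christoffel g y e a b)
     = (1/2) * (\<Sum>f\<in>UNIV. (\<Sum>e\<in>UNIV. gg y d e * gi y e f) * (dg a y f b + dg b y f a - dg f y a b))"
    unfolding chr_eq sum_distrib_left sum_distrib_right
    by (subst sum.swap) (simp add: mult_ac sum_distrib_left)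
  also have "\<dots> = (1/2) * (dg a y d b + dg b y d a - dg d y a b)"
    using ginv_r[OF y] by simp
  finally show ?thesis .
qed

lemma dg_chr: "y \<in> U \<Longrightarrow> dg c y a b = (\<Sum>e\<in>UNIV. christoffel g y e c a * gg y e b) + (\<Sum>e\<in>UNIV. christoffel g y e c b * gg y a e)"
proof -
  assume y: "y \<in> U"
  have 1: "(\<Sum>e\<in>UNIV. christoffel g y e c a * gg y e b) = (1/2) * (dg c y b a + dg a y b c - dg b y c a)"
    using chr_low[OF y, of b c a] gsym[OF y] by (simp add: mult.commute)
  have 2: "(\<Sum>e\<in>UNIV. christoffel g y e c b * gg y a e) = (1/2) * (dg c y a b + dg b y a c - dg a y c b)"
    using chr_low[OF y, of a c b] by (simp add: mult.commute)
  show ?thesis unfolding 1 2 using dgsym[OF y, of c a b] dgsym[OF y, of a b c] dgsym[OF y, of b a c]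
    by (simp add: algebra_simps)
qed

lemma pd_gi: "y \<in> U \<Longrightarrow> pd c (\<lambda>z. ginv g z $ k $ l) y =
   - (\<Sum>m\<in>UNIV. christoffel g y k c m * gi y m l) - (\<Sum>m\<in>UNIV. christoffel g y l c m * gi y k m)"
proof -
  assume y: "y \<in> U"
  define D where "D m = pd c (\<lambda>z. ginv g z $ k $ m) y" for m
  have "(\<Sum>m\<in>UNIV. D m * gg y m n + gi y k m * dg c y m n) = 0" for n
  proof -
    have "pd c (\<lambda>z. \<Sum>m\<in>UNIV. ginv g z $ k $ m * g z $ m $ n) y = pd c (\<lambda>z. dl k n) y"
      by (rule pd_local[OF openU y]) (use ginv_l in \<open>simp add: gi_def gg_def\<close>)
    also have "\<dots> = 0" by (rule pd_const)
    finally have "pd c (\<lambda>z. \<Sum>m\<in>UNIV. ginv g z $ k $ m * g z $ m $ n) y = 0" .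
    moreover have "pd c (\<lambda>z. \<Sum>m\<in>UNIV. ginv g z $ k $ m * g z $ m $ n) y = (\<Sum>m\<in>UNIV. D m * gg y m n + gi y k m * dg c y m n)"
      by (subst pd_sum) (auto intro!: differentiable_mult d_gi[OF y] d_gg[OF y] sum.cong
          simp: pd_mult d_gi[OF y] d_gg[OF y] D_def gg_def gi_def dg_def)
    ultimately show ?thesis by simp
  qed
  hence eq: "(\<Sum>m\<in>UNIV. D m * gg y m n) = - (\<Sum>m\<in>UNIV. gi y k m * dg c y m n)" for n
    by (simp add: sum.distrib eq_neg_iff_add_eq_0)
  have "D l = (\<Sum>n\<in>UNIV. (\<Sum>m\<in>UNIV. D m * gg y m n) * gi y n l)"
  proof -
    have "(\<Sum>n\<in>UNIV. (\<Sum>m\<in>UNIV. D m * gg y m n) * gi y n l) = (\<Sum>m\<in>UNIV. D m * (\<Sum>n\<in>UNIV. gg y m n * gi y n l))"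
      unfolding sum_distrib_left sum_distrib_right by (subst sum.swap) (simp add: mult_ac)
    thus ?thesis using ginv_r[OF y] by simp
  qed
  also have "\<dots> = - (\<Sum>n\<in>UNIV. \<Sum>m\<in>UNIV. gi y k m * dg c y m n * gi y n l)"
    unfolding eq by (simp add: sum_distrib_right sum_negf)
  also have "(\<Sum>n\<in>UNIV. \<Sum>m\<in>UNIV. gi y k m * dg c y m n * gi y n l)
     = (\<Sum>n\<in>UNIV. \<Sum>m\<in>UNIV. \<Sum>e\<in>UNIV. gi y k m * christoffel g y e c m * gg y e n * gi y n l)
     + (\<Sum>n\<in>UNIV. \<Sum>m\<in>UNIV. \<Sum>e\<in>UNIV. gi y k m * christoffel g y e c n * gg y m e * gi y n l)"
    unfolding dg_chr[OF y] by (simp add: sum.distrib sum_distrib_left sum_distrib_right algebra_simps)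
  also have "(\<Sum>n\<in>UNIV. \<Sum>m\<in>UNIV. \<Sum>e\<in>UNIV. gi y k m * christoffel g y e c m * gg y e n * gi y n l)
     = (\<Sum>m\<in>UNIV. christoffel g y l c m * gi y k m)"
  proof -
    have "(\<Sum>n\<in>UNIV. \<Sum>m\<in>UNIV. \<Sum>e\<in>UNIV. gi y k m * christoffel g y e c m * gg y e n * gi y n l)
       = (\<Sum>m\<in>UNIV. \<Sum>e\<in>UNIV. gi y k m * christoffel g y e c m * (\<Sum>n\<in>UNIV. gg y e n * gi y n l))"
      unfolding sum_distrib_left by (subst sum.swap, subst (2) sum.swap) (simp add: mult_ac)
    thus ?thesis using ginv_r[OF y] by (simp add: dl_def mult_ac if_distrib cong: if_cong)
  qed
  also have "(\<Sum>n\<in>UNIV. \<Sum>m\<in>UNIV. \<Sum>e\<in>UNIV. gi y k m * christoffel g y e c n * gg y m e * gi y n l)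
     = (\<Sum>m\<in>UNIV. christoffel g y k c m * gi y m l)"
  proof -
    have "(\<Sum>n\<in>UNIV. \<Sum>m\<in>UNIV. \<Sum>e\<in>UNIV. gi y k m * christoffel g y e c n * gg y m e * gi y n l)
       = (\<Sum>n\<in>UNIV. \<Sum>e\<in>UNIV. (\<Sum>m\<in>UNIV. gi y k m * gg y m e) * christoffel g y e c n * gi y n l)"
      unfolding sum_distrib_right by (rule sum.cong[OF refl], subst sum.swap) (simp add: mult_ac)
    thus ?thesis using ginv_l[OF y] by (simp add: mult.assoc)
  qed
  finally show ?thesis unfolding D_def by simp
qed

end


lemmas pd_rules = pd_add pd_diff pd_mult pd_minus pd_const pd_inverse pd_sum
lemmas dif_rules = differentiable_add differentiable_diff differentiable_mult differentiable_minus
  differentiable_const differentiable_inverse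

lemma matrix_inv_scale:
  fixes A :: "real^'n::finite^'n"
  assumes d: "det A \<noteq> 0" and c: "c \<noteq> 0"
  shows "matrix_inv (c *\<^sub>R A) = inverse c *\<^sub>R matrix_inv A"
proof -
  have iA: "invertible A" using d invertible_det_nz by blast
  have "invertible (c *\<^sub>R A)" using scalar_invertible[OF c iA] .
  hence dc: "det (c *\<^sub>R A) \<noteq> 0" using invertible_det_nz by blast
  let ?B = "inverse c *\<^sub>R matrix_inv A"
  let ?X = "matrix_inv (c *\<^sub>R A)"
  have MB: "(c *\<^sub>R A) ** ?B = mat 1"
    using matrix_inv_props[OF d] c by (simp add: matrix_scalar_ac scalar_matrix_assoc[symmetric])
  have XM: "?X ** (c *\<^sub>R A) = mat 1" using matrix_inv_props[OF dc] by blast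
  have "?B = (?X ** (c *\<^sub>R A)) ** ?B" using XM by simp
  also have "\<dots> = ?X ** ((c *\<^sub>R A) ** ?B)" by (simp add: matrix_mul_assoc)
  also have "\<dots> = ?X" using MB by simp
  finally show ?thesis by simp
qed

locale conf = met g U for g :: "real^'n::finite \<Rightarrow> real^'n^'n" and U +
  fixes Om :: "real^'n \<Rightarrow> real" and lam :: real
  assumes smO: "smooth_on U Om" and posO: "\<And>y. y \<in> U \<Longrightarrow> Om y > 0" and n3: "CARD('n) \<ge> 3"
    and einst: "\<And>y a b. y \<in> U \<Longrightarrow> ricci (\<lambda>y. inverse ((Om y)\<^sup>2) *\<^sub>R g y) y a b
        = lam * (inverse ((Om y)\<^sup>2) *\<^sub>R g y) $ a $ b"
begin

definition "iO y = inverse (Om y)"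
definition "uf y a = - pd a Om y * iO y"
definition "hH y b a = - pd b (pd a Om) y * iO y + pd a Om y * pd b Om y * (iO y * iO y)"
definition "W y = inverse ((Om y)\<^sup>2)"

lemma dO: "y \<in> U \<Longrightarrow> Om differentiable (at y)"
  using smooth_diff[OF smO, of y "[]"] by simp
lemma dO1: "y \<in> U \<Longrightarrow> pd a Om differentiable (at y)"
  using smooth_diff[OF smO, of y "[a]"] by simp
lemma dO2: "y \<in> U \<Longrightarrow> pd b (pd a Om) differentiable (at y)"
  using smooth_diff[OF smO, of y "[b, a]"] by simp
lemma dO3: "y \<in> U \<Longrightarrow> pd c (pd b (pd a Om)) differentiable (at y)"
  using smooth_diff[OF smO, of y "[c, b, a]"] by simp
lemma Onz: "y \<in> U \<Longrightarrow> Om y \<noteq> 0" using posO by force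

lemma d_iO: "y \<in> U \<Longrightarrow> iO differentiable (at y)"
  unfolding iO_def using differentiable_inverse[OF dO Onz] by simp

lemma pd_iO: "y \<in> U \<Longrightarrow> pd r iO y = - pd r Om y * (iO y * iO y)"
proof -
  assume y: "y \<in> U"
  have "pd r (\<lambda>z. inverse (Om z)) y = - pd r Om y / (Om y)^2" by (rule pd_inverse[OF dO[OF y] Onz[OF y]])
  thus ?thesis unfolding iO_def by (simp add: power2_eq_square field_simps)
qed

lemma d_uf: "y \<in> U \<Longrightarrow> (\<lambda>z. uf z a) differentiable (at y)"
  unfolding uf_def by (intro dif_rules dO1 d_iO)

lemma pd_uf: "y \<in> U \<Longrightarrow> pd b (\<lambda>z. uf z a) y = hH y b a"
  unfolding uf_def hH_def
  by (simp add: pd_mult pd_minus dif_rules dO1 dO2 d_iO pd_iO algebra_simps)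

lemma O2sym: "y \<in> U \<Longrightarrow> pd b (pd a Om) y = pd a (pd b Om) y"
  by (rule schwarz[OF openU _ smO])

lemma O3sym: "y \<in> U \<Longrightarrow> pd r (pd s (pd a Om)) y = pd s (pd r (pd a Om)) y"
  by (rule schwarz[OF openU _ smooth_pd[OF smO]])

lemma hH_sym: "y \<in> U \<Longrightarrow> hH y b a = hH y a b"
  unfolding hH_def using O2sym[of y b a] by (simp add: algebra_simps)

lemma d_hH: "y \<in> U \<Longrightarrow> (\<lambda>z. hH z b a) differentiable (at y)"
  unfolding hH_def by (intro dif_rules dO1 dO2 d_iO)

lemma dH_sym: "y \<in> U \<Longrightarrow> pd r (\<lambda>z. hH z s a) y = pd s (\<lambda>z. hH z r a) y"
proof -
  assume y: "y \<in> U"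
  have e: "pd r (\<lambda>z. hH z s a) y = - (pd r (pd s (pd a Om)) y * iO y + pd s (pd a Om) y * pd r iO y)
      + (pd r (pd a Om) y * pd s Om y + pd a Om y * pd r (pd s Om) y) * (iO y * iO y)
      + pd a Om y * pd s Om y * (pd r iO y * iO y + iO y * pd r iO y)" for r s
    unfolding hH_def by (simp add: pd_rules dif_rules dO1 dO2 d_iO y algebra_simps)
  show ?thesis unfolding e pd_iO[OF y] O3sym[OF y, of r s a] O2sym[OF y, of r s]
    using O2sym[OF y, of r a] O2sym[OF y, of s a] by (simp add: algebra_simps)
qed

lemma d_W: "y \<in> U \<Longrightarrow> W differentiable (at y)"
proof -
  assume y: "y \<in> U"
  have "(\<lambda>z. iO z * iO z) differentiable (at y)" by (intro dif_rules d_iO y)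
  moreover have "W = (\<lambda>z. iO z * iO z)" by (rule ext) (simp add: W_def iO_def power2_eq_square)
  ultimately show ?thesis by simp
qed

lemma pd_W: "y \<in> U \<Longrightarrow> pd r W y = 2 * W y * uf y r"
proof -
  assume y: "y \<in> U"
  have "W = (\<lambda>z. iO z * iO z)" by (rule ext) (simp add: W_def iO_def power2_eq_square)
  hence "pd r W y = pd r iO y * iO y + iO y * pd r iO y" using pd_mult[OF d_iO[OF y] d_iO[OF y]] by simp
  thus ?thesis unfolding pd_iO[OF y] uf_def W_def iO_def by (simp add: power2_eq_square field_simps)
qed

abbreviation "Gt \<equiv> (\<lambda>y. inverse ((Om y)\<^sup>2) *\<^sub>R g y)"

definition "Kf y d a c = dl d a * uf y c + dl d c * uf y a - g y $ a $ c * (\<Sum>e\<in>UNIV. ginv g y $ d $ e * uf y e)"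

lemma ptY: assumes y: "y \<in> U" shows "pt (gg y) (gi y) (Gm y) (hH y)"
proof unfold_locales
  fix a b c
  show "gg y a b = gg y b a" by (rule gsym[OF y])
  show "gi y a b = gi y b a" by (rule gisym[OF y])
  show "(\<Sum>m\<in>UNIV. gg y a m * gi y m b) = dl a b" by (rule ginv_r[OF y])
  show "(\<Sum>m\<in>UNIV. gi y a m * gg y m b) = dl a b" by (rule ginv_l[OF y])
  show "Gm y c a b = Gm y c b a" by (rule chr_sym[OF y])
  show "hH y a b = hH y b a" by (rule hH_sym[OF y])
qed

lemma ginv_Gt: "y \<in> U \<Longrightarrow> ginv Gt y $ c $ d = (Om y)\<^sup>2 * gi y c d"
proof -
  assume y: "y \<in> U"
  have "inverse ((Om y)\<^sup>2) \<noteq> 0" using Onz[OF y] by simp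
  hence "matrix_inv (Gt y) = inverse (inverse ((Om y)\<^sup>2)) *\<^sub>R matrix_inv (g y)"
    using matrix_inv_scale[OF gdet[OF y]] by blast
  thus ?thesis unfolding ginv_def gi_def by simp
qed

lemma pd_Gt: "y \<in> U \<Longrightarrow> pd a (\<lambda>z. Gt z $ d $ b) y = 2 * W y * uf y a * gg y d b + W y * dg a y d b"
proof -
  assume y: "y \<in> U"
  have "(\<lambda>z. Gt z $ d $ b) = (\<lambda>z. W z * g z $ d $ b)" by (rule ext) (simp add: W_def)
  hence "pd a (\<lambda>z. Gt z $ d $ b) y = pd a W y * g y $ d $ b + W y * pd a (\<lambda>z. g z $ d $ b) y"
    using pd_mult[OF d_W[OF y] d_gg[OF y]] by simp
  thus ?thesis unfolding pd_W[OF y] gg_def dg_def .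
qed

lemma chr_Gt: "y \<in> U \<Longrightarrow> christoffel Gt y c a b = Gm y c a b + Kf y c a b"
proof -
  assume y: "y \<in> U"
  have OW: "(Om y)\<^sup>2 * W y = 1" unfolding W_def using Onz[OF y] by simp
  have pt1: "(Om y)\<^sup>2 * gi y c d * (pd a (\<lambda>z. Gt z $ d $ b) y + pd b (\<lambda>z. Gt z $ d $ a) y - pd d (\<lambda>z. Gt z $ a $ b) y)
     = gi y c d * (dg a y d b + dg b y d a - dg d y a b)
       + 2 * (gi y c d * (uf y a * gg y d b + uf y b * gg y d a - uf y d * gg y a b))" for d
  proof -
    have "(Om y)\<^sup>2 * gi y c d * (pd a (\<lambda>z. Gt z $ d $ b) y + pd b (\<lambda>z. Gt z $ d $ a) y - pd d (\<lambda>z. Gt z $ a $ b) y)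
       = ((Om y)\<^sup>2 * W y) * (gi y c d * (dg a y d b + dg b y d a - dg d y a b)
       + 2 * (gi y c d * (uf y a * gg y d b + uf y b * gg y d a - uf y d * gg y a b)))"
      unfolding pd_Gt[OF y] using gsym[OF y, of a d] by (simp add: algebra_simps)
    thus ?thesis using OW by simp
  qed
  have X: "christoffel Gt y c a b = (1/2) * (\<Sum>d\<in>UNIV. gi y c d * (dg a y d b + dg b y d a - dg d y a b))
      + (\<Sum>d\<in>UNIV. gi y c d * (uf y a * gg y d b + uf y b * gg y d a - uf y d * gg y a b))"
  proof -
    have "christoffel Gt y c a b = (1/2) * ((\<Sum>d\<in>UNIV. gi y c d * (dg a y d b + dg b y d a - dg d y a b))
      + 2 * (\<Sum>d\<in>UNIV. gi y c d * (uf y a * gg y d b + uf y b * gg y d a - uf y d * gg y a b)))"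
      unfolding christoffel_def ginv_Gt[OF y] pt1 by (simp only: sum.distrib sum_distrib_left[symmetric])
    thus ?thesis by (simp add: algebra_simps)
  qed
  have Y: "(\<Sum>d\<in>UNIV. gi y c d * (uf y a * gg y d b + uf y b * gg y d a - uf y d * gg y a b))
     = uf y a * dl c b + uf y b * dl c a - gg y a b * (\<Sum>d\<in>UNIV. gi y c d * uf y d)"
  proof -
    have "(\<Sum>d\<in>UNIV. gi y c d * (uf y a * gg y d b + uf y b * gg y d a - uf y d * gg y a b))
     = uf y a * (\<Sum>d\<in>UNIV. gi y c d * gg y d b) + uf y b * (\<Sum>d\<in>UNIV. gi y c d * gg y d a)
       - gg y a b * (\<Sum>d\<in>UNIV. gi y c d * uf y d)"
      by (simp add: sum.distrib sum_subtractf sum_distrib_left algebra_simps)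
    thus ?thesis using ginv_l[OF y] by simp
  qed
  show ?thesis unfolding X Y chr_eq[symmetric] unfolding Kf_def gg_def gi_def by (simp add: algebra_simps)
qed

lemma Kf_eq: "y \<in> U \<Longrightarrow> Kf y d a c = pt.K (gg y) (gi y) (uf y) d a c"
  unfolding Kf_def pt.K_def[OF ptY] pt.U_def[OF ptY] gg_def gi_def by simp

lemma d_Kf: "y \<in> U \<Longrightarrow> (\<lambda>z. Kf z d a c) differentiable (at y)"
  unfolding Kf_def
  by (intro dif_rules differentiable_sum ballI finite d_uf d_gg d_gi) auto

lemma pd_Kf: assumes y: "y \<in> U"
  shows "pd b (\<lambda>z. Kf z d a c) y = pt.dK (gg y) (gi y) (Gm y) (uf y) (hH y) b d a c"
proof -
  have ds: "(\<lambda>z. \<Sum>e\<in>UNIV. ginv g z $ d $ e * uf z e) differentiable (at y)"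
    by (intro dif_rules differentiable_sum ballI finite d_uf d_gg d_gi y)
  have ps: "pd b (\<lambda>z. \<Sum>e\<in>UNIV. ginv g z $ d $ e * uf z e) y
     = (\<Sum>e\<in>UNIV. pd b (\<lambda>z. ginv g z $ d $ e) y * uf y e + gi y d e * hH y b e)"
    by (subst pd_sum) (auto intro!: sum.cong dif_rules d_uf d_gi y simp: pd_mult d_uf d_gi y pd_uf gi_def)
  have "pd b (\<lambda>z. Kf z d a c) y = dl d a * hH y b c + dl d c * hH y b a
     - (dg b y a c * (\<Sum>e\<in>UNIV. gi y d e * uf y e)
        + gg y a c * (\<Sum>e\<in>UNIV. pd b (\<lambda>z. ginv g z $ d $ e) y * uf y e + gi y d e * hH y b e))"
    unfolding Kf_def
    by (simp add: pd_add pd_diff pd_mult pd_const dif_rules d_uf d_gg ds ps y pd_uf dg_def gg_def gi_def)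
  also have "\<dots> = pt.dK (gg y) (gi y) (Gm y) (uf y) (hH y) b d a c"
    unfolding pt.dK_def[OF ptY[OF y]] pt.dG_def[OF ptY[OF y]] pt.dGi_def[OF ptY[OF y]] pt.U_def[OF ptY[OF y]]
      dg_chr[OF y] pd_gi[OF y] by (simp add: algebra_simps)
  finally show ?thesis .
qed

lemma pd_chrGt: "y \<in> U \<Longrightarrow> pd b (\<lambda>z. christoffel Gt z d a c) y
    = pd b (\<lambda>z. Gm z d a c) y + pt.dK (gg y) (gi y) (Gm y) (uf y) (hH y) b d a c"
proof -
  assume y: "y \<in> U"
  have "pd b (\<lambda>z. christoffel Gt z d a c) y = pd b (\<lambda>z. Gm z d a c + Kf z d a c) y"
    by (rule pd_local[OF openU y]) (simp add: chr_Gt)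
  also have "\<dots> = pd b (\<lambda>z. Gm z d a c) y + pd b (\<lambda>z. Kf z d a c) y"
    by (rule pd_add[OF d_chr[OF y] d_Kf[OF y]])
  finally show ?thesis using pd_Kf[OF y] by simp
qed

lemma ricci_Gt: assumes y: "y \<in> U"
  shows "ricci Gt y a c = ricci g y a c
    - (pt.nn TYPE('n) - 2) * pt.Hs (Gm y) (uf y) (hH y) a c + (pt.nn TYPE('n) - 2) * uf y a * uf y c
    - gg y a c * (pt.trH (gi y) (Gm y) (uf y) (hH y) + (pt.nn TYPE('n) - 2) * pt.uu (gi y) (uf y))"
proof -
  have "ricci Gt y a c = (\<Sum>b\<in>UNIV. (pd b (\<lambda>z. Gm z b a c) y + pt.dK (gg y) (gi y) (Gm y) (uf y) (hH y) b b a c)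
      - (pd a (\<lambda>z. Gm z b b c) y + pt.dK (gg y) (gi y) (Gm y) (uf y) (hH y) a b b c)
      + (\<Sum>e\<in>UNIV. (Gm y b b e + pt.K (gg y) (gi y) (uf y) b b e) * (Gm y e a c + pt.K (gg y) (gi y) (uf y) e a c)
        - (Gm y b a e + pt.K (gg y) (gi y) (uf y) b a e) * (Gm y e b c + pt.K (gg y) (gi y) (uf y) e b c)))"
    unfolding ricci_def riem_def pd_chrGt[OF y] chr_Gt[OF y] Kf_eq[OF y] ..
  also have "\<dots> = ricci g y a c
    - (pt.nn TYPE('n) - 2) * pt.Hs (Gm y) (uf y) (hH y) a c + (pt.nn TYPE('n) - 2) * uf y a * uf y c
    - gg y a c * (pt.trH (gi y) (Gm y) (uf y) (hH y) + (pt.nn TYPE('n) - 2) * pt.uu (gi y) (uf y))"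
    unfolding pt.ricci_tilde[OF ptY[OF y], of "\<lambda>b d a c. pd b (\<lambda>z. Gm z d a c) y"]
    unfolding ricci_def riem_def ..
  finally show ?thesis .
qed

definition "cst = lam / (2 * (real CARD('n) - 1))"

definition "Lf y s a = (hH y s a - (\<Sum>e\<in>UNIV. Gm y e s a * uf y e)) - uf y s * uf y a
   + g y $ s $ a * ((\<Sum>e\<in>UNIV. uf y e * (\<Sum>l\<in>UNIV. ginv g y $ e $ l * uf y l)) / 2 + cst * W y)"


lemma schouten_U: assumes y: "y \<in> U" shows "schouten g y s a = Lf y s a"
proof -
  interpret P: pt "gg y" "gi y" "Gm y" "uf y" "hH y" by (rule ptY[OF y])
  have R: "ricci g y a c = lam * W y * gg y a c + (P.nn - 2) * P.Hs a c - (P.nn - 2) * (uf y a * uf y c)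
      + gg y a c * (P.trH + (P.nn - 2) * P.uu)" for a c
  proof -
    have "ricci Gt y a c = lam * (W y * gg y a c)" using einst[OF y, of a c] by (simp add: W_def gg_def)
    thus ?thesis using ricci_Gt[OF y, of a c] by (simp add: algebra_simps)
  qed
  have n3': "3 \<le> P.nn" using n3 by (simp add: P.nn_def)
  have "ricci g y s a / (P.nn - 2) - gg y s a * (\<Sum>a\<in>UNIV. \<Sum>c\<in>UNIV. gi y a c * ricci g y a c) / (2 * (P.nn - 1) * (P.nn - 2))
     = P.Hs s a - uf y s * uf y a + gg y s a * (P.uu / 2 + lam * W y / (2 * (P.nn - 1)))"
    by (rule P.schouten_alg[OF n3' R])
  thus ?thesis unfolding schouten_def scal_def Lf_def P.Hs_def P.uu_def P.U_def cst_def
    by (simp add: P.nn_def gg_def gi_def)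
qed

lemma pd_divc: "f differentiable (at x) \<Longrightarrow> pd i (\<lambda>y. f y / (c::real)) x = pd i f x / c"
  using pd_mult[of f x "\<lambda>y. inverse c" i] by (simp add: pd_const divide_inverse)

lemma d_U: "y \<in> U \<Longrightarrow> (\<lambda>z. \<Sum>l\<in>UNIV. ginv g z $ e $ l * uf z l) differentiable (at y)"
  by (intro dif_rules differentiable_sum ballI finite d_uf d_gi) auto

lemma pd_U: "y \<in> U \<Longrightarrow> pd r (\<lambda>z. \<Sum>l\<in>UNIV. ginv g z $ e $ l * uf z l) y
   = (\<Sum>l\<in>UNIV. pd r (\<lambda>z. ginv g z $ e $ l) y * uf y l + gi y e l * hH y r l)"
  by (subst pd_sum) (auto intro!: sum.cong dif_rules d_uf d_gi simp: pd_mult d_uf d_gi pd_uf gi_def)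

lemma d_uu: "y \<in> U \<Longrightarrow> (\<lambda>z. \<Sum>e\<in>UNIV. uf z e * (\<Sum>l\<in>UNIV. ginv g z $ e $ l * uf z l)) differentiable (at y)"
  by (intro dif_rules differentiable_sum ballI finite d_uf d_U) auto

lemma pd_uu: "y \<in> U \<Longrightarrow> pd r (\<lambda>z. \<Sum>e\<in>UNIV. uf z e * (\<Sum>l\<in>UNIV. ginv g z $ e $ l * uf z l)) y
   = (\<Sum>e\<in>UNIV. hH y r e * (\<Sum>l\<in>UNIV. gi y e l * uf y l)
        + uf y e * (\<Sum>l\<in>UNIV. pd r (\<lambda>z. ginv g z $ e $ l) y * uf y l + gi y e l * hH y r l))"
  by (subst pd_sum) (auto intro!: sum.cong dif_rules d_uf d_U simp: pd_mult d_uf d_U pd_U pd_uf gi_def)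

lemma d_Hs: "y \<in> U \<Longrightarrow> (\<lambda>z. \<Sum>e\<in>UNIV. Gm z e s a * uf z e) differentiable (at y)"
  by (intro dif_rules differentiable_sum ballI finite d_uf d_chr) auto

lemma pd_Hs: "y \<in> U \<Longrightarrow> pd r (\<lambda>z. \<Sum>e\<in>UNIV. Gm z e s a * uf z e) y
   = (\<Sum>e\<in>UNIV. pd r (\<lambda>z. Gm z e s a) y * uf y e + Gm y e s a * hH y r e)"
  by (subst pd_sum) (auto intro!: sum.cong dif_rules d_uf d_chr simp: pd_mult d_uf d_chr pd_uf)

lemma pt2X: assumes x: "x \<in> U" shows "pt2 (gg x) (gi x) (Gm x) (hH x) (\<lambda>r s a. pd r (\<lambda>z. hH z s a) x)"
proof -
  interpret P: pt "gg x" "gi x" "Gm x" "uf x" "hH x" by (rule ptY[OF x])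
  show ?thesis by unfold_locales (rule dH_sym[OF x])
qed

lemma pd_Lf: assumes x: "x \<in> U"
  shows "pd r (\<lambda>y. Lf y s a) x = pt2.dL (gg x) (gi x) (Gm x) (uf x) (hH x)
     (\<lambda>r d s a. pd r (\<lambda>z. Gm z d s a) x) (\<lambda>r s a. pd r (\<lambda>z. hH z s a) x) (W x) cst r s a"
proof -
  interpret P: pt2 "gg x" "gi x" "Gm x" "uf x" "hH x" "\<lambda>r d s a. pd r (\<lambda>z. Gm z d s a) x"
    "\<lambda>r s a. pd r (\<lambda>z. hH z s a) x" "W x" cst by (rule pt2X[OF x])
  have "pd r (\<lambda>y. Lf y s a) x = (pd r (\<lambda>z. hH z s a) x
      - (\<Sum>e\<in>UNIV. pd r (\<lambda>z. Gm z e s a) x * uf x e + Gm x e s a * hH x r e))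
      - (hH x r s * uf x a + uf x s * hH x r a)
      + (dg r x s a * ((\<Sum>e\<in>UNIV. uf x e * (\<Sum>l\<in>UNIV. gi x e l * uf x l)) / 2 + cst * W x)
         + gg x s a * ((\<Sum>e\<in>UNIV. hH x r e * (\<Sum>l\<in>UNIV. gi x e l * uf x l)
        + uf x e * (\<Sum>l\<in>UNIV. pd r (\<lambda>z. ginv g z $ e $ l) x * uf x l + gi x e l * hH x r l)) / 2
         + cst * (2 * W x * uf x r)))"
    unfolding Lf_def
    by (simp add: pd_add pd_diff pd_mult pd_const pd_divc dif_rules d_hH d_Hs d_uf d_gg d_uu d_W x
        pd_Hs pd_uu pd_uf pd_W dg_def gg_def gi_def)
  also have "\<dots> = P.dL r s a"
    unfolding P.dL_def P.dG_def P.P_def P.dP_def P.duu_def P.uu_def P.U_def P.dGi_def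
      dg_chr[OF x] pd_gi[OF x] by (simp add: algebra_simps)
  finally show ?thesis .
qed


lemma weyl_eq: assumes x: "x \<in> U"
  shows "weyl g x r s a d = pt2.wy (gg x) (gi x) (Gm x) (uf x) (hH x)
     (\<lambda>r d s a. pd r (\<lambda>z. Gm z d s a) x) (W x) cst r s a d"
proof -
  interpret P: pt2 "gg x" "gi x" "Gm x" "uf x" "hH x" "\<lambda>r d s a. pd r (\<lambda>z. Gm z d s a) x"
    "\<lambda>r s a. pd r (\<lambda>z. hH z s a) x" "W x" cst by (rule pt2X[OF x])
  have L: "schouten g x s a = P.L s a" for s a
    unfolding schouten_U[OF x] Lf_def P.L_def P.Hs_def P.P_def P.uu_def P.U_def gg_def gi_def ..
  show ?thesis
    unfolding weyl_def P.wy_def P.rm_def P.Lm_def schouten_mixed_def riem_def L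
    by (simp add: dl_def gg_def gi_def)
qed

lemma nabla_eq: assumes x: "x \<in> U"
  shows "nabla_schouten g x r s a = pt2.nL (gg x) (gi x) (Gm x) (uf x) (hH x)
     (\<lambda>r d s a. pd r (\<lambda>z. Gm z d s a) x) (\<lambda>r s a. pd r (\<lambda>z. hH z s a) x) (W x) cst r s a"
proof -
  interpret P: pt2 "gg x" "gi x" "Gm x" "uf x" "hH x" "\<lambda>r d s a. pd r (\<lambda>z. Gm z d s a) x"
    "\<lambda>r s a. pd r (\<lambda>z. hH z s a) x" "W x" cst by (rule pt2X[OF x])
  have L: "schouten g x s a = P.L s a" for s a
    unfolding schouten_U[OF x] Lf_def P.L_def P.Hs_def P.P_def P.uu_def P.U_def gg_def gi_def ..
  have "pd r (\<lambda>y. schouten g y s a) x = pd r (\<lambda>y. Lf y s a) x"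
    by (rule pd_local[OF openU x]) (rule schouten_U)
  also have "\<dots> = P.dL r s a" by (rule pd_Lf[OF x])
  finally have D: "pd r (\<lambda>y. schouten g y s a) x = P.dL r s a" .
  show ?thesis unfolding nabla_schouten_def P.nL_def D L ..
qed

lemma cotton: assumes x: "x \<in> U"
  shows "alt_nabla_schouten g x r s a = (\<Sum>d\<in>UNIV. weyl g x r s a d * (uf x d / 2))"
proof -
  interpret P: pt2 "gg x" "gi x" "Gm x" "uf x" "hH x" "\<lambda>r d s a. pd r (\<lambda>z. Gm z d s a) x"
    "\<lambda>r s a. pd r (\<lambda>z. hH z s a) x" "W x" cst by (rule pt2X[OF x])
  show ?thesis unfolding alt_nabla_schouten_def nabla_eq[OF x] weyl_eq[OF x] by (rule P.stepC)
qed

lemma main: assumes x: "x \<in> U"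
  shows "(\<Sum>q\<in>UNIV. \<Sum>p\<in>UNIV. \<Sum>r\<in>UNIV. \<Sum>s\<in>UNIV.
        weyl_dduu g x b e q p * pinv_dduu g x q p r s * alt_nabla_schouten g x r s a)
    = alt_nabla_schouten g x b e a"
  by (rule contraction[OF x cotton[OF x]])

end

theorem proposition2:
  fixes g :: "real^'n::finite \<Rightarrow> real^'n^'n" and \<Omega> :: "real^'n \<Rightarrow> real"
    and U :: "(real^'n) set"
  assumes "CARD('n) \<ge> 3"
    and "metric_on U g"
    and "\<forall>x\<in>U. \<not> weyl_invertible g x"
    and "smooth_on U \<Omega>"
    and "\<forall>x\<in>U. \<Omega> x > 0"
    and "einstein_on U (\<lambda>y. inverse ((\<Omega> y)\<^sup>2) *\<^sub>R g y)"
  shows "\<forall>x\<in>U. \<forall>a b e.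
    (\<Sum>q\<in>UNIV. \<Sum>p\<in>UNIV. \<Sum>r\<in>UNIV. \<Sum>s\<in>UNIV.
        weyl_dduu g x b e q p * pinv_dduu g x q p r s * alt_nabla_schouten g x r s a)
    = alt_nabla_schouten g x b e a"
  proof (intro ballI allI)
  fix x a b e
  assume x: "x \<in> U"
  interpret met g U by unfold_locales (rule assms(2))
  obtain lam where lam: "\<forall>x\<in>U. \<forall>a b. ricci (\<lambda>y. inverse ((\<Omega> y)\<^sup>2) *\<^sub>R g y) x a b
      = lam * ((\<lambda>y. inverse ((\<Omega> y)\<^sup>2) *\<^sub>R g y) x) $ a $ b"
    using assms(6) unfolding einstein_on_def by blast
  interpret C: conf g U \<Omega> lam
    by unfold_locales (use assms(4,5,1) lam in auto)
  show "(\<Sum>q\<in>UNIV. \<Sum>p\<in>UNIV. \<Sum>r\<in>UNIV. \<Sum>s\<in>UNIV.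
        weyl_dduu g x b e q p * pinv_dduu g x q p r s * alt_nabla_schouten g x r s a)
    = alt_nabla_schouten g x b e a"
    by (rule C.main[OF x])
qed

end
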